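(* Let $q$ be an odd prime power, $P\in\mathbb{F}_q[T]$ monic irreducible, $h=(h_1,\dots,h_k)$ a $k$-tuple of pairwise distinct polynomials, and fix an integer $\nu>\nu_h(P)$. (1) If $\chi_q(P)=-1$, then $\delta_{q,h}(P)=|P|^{-\nu}\big(\#\Omega^*_{q,h}(P^\nu)+\frac{1}{|P|+1}\#\Omega_{q,h}(P^\nu)\big)$ if $\nu$ is odd, and $\delta_{q,h}(P)=|P|^{-\nu}\big(\#\Omega^*_{q,h}(P^\nu)+\frac{|P|}{|P|+1}\#\Omega_{q,h}(P^\nu)\big)$ if $\nu$ is even. (2) If $\chi_q(P)=0$, then $\delta_{q,h}(P)=|P|^{-\nu}\big(\#\Omega^*_{q,h}(P^\nu)+\frac12\#\Omega_{q,h}(P^\nu)\big)$.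
   Context: $|P|=q^{\deg P}$; $v_P$ the $P$-adic valuation; $\chi_q(f)=0$ if $f(0)=0$, $1$ if $f(0)$ is a nonzero square in $\mathbb{F}_q$, $-1$ otherwise. $\mathcal{A}_q(P^\nu)=\{A^2+TB^2\bmod P^\nu:A,B\in\mathbb{F}_q[T]\}$, $\mathcal{A}_{q,h}(P^\nu)=\{f\bmod P^\nu:f+h_i\in\mathcal{A}_q(P^\nu)\ \forall i\}$, $\delta_{q,h}(P)=\lim_{\nu\to\infty}|P|^{-\nu}\#\mathcal{A}_{q,h}(P^\nu)$. $\nu_h(P)=\max_{i\ne j}v_P(h_i-h_j)$ (taken as $0$ if $k=1$). $\Omega_{q,h}(P^\nu)=\{f\in\mathcal{A}_{q,h}(P^\nu):\exists i\ f+h_i\equiv0\bmod P^\nu\}$ and $\Omega^*_{q,h}(P^\nu)=\{f\in\mathcal{A}_{q,h}(P^\nu):\forall i\ f+h_i\not\equiv0\bmod P^\nu\}$. *)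

theory Defs
  imports "HOL-Analysis.Analysis" "HOL-Computational_Algebra.Computational_Algebra"
begin

text \<open>Polynomials over the finite field F_q are modelled as 'a poly with
  'a :: {finite, field}; q = CARD('a). Residues modulo M are represented by
  their canonical remainders f mod M.\<close>

definition absP :: "'a::{finite,field_gcd} poly \<Rightarrow> real" where
  "absP P = real (CARD('a)) ^ degree P"

definition chi_q :: "'a::{finite,field_gcd} poly \<Rightarrow> int" where
  "chi_q f = (if coeff f 0 = 0 then 0
              else if (\<exists>c. coeff f 0 = c ^ 2) then 1 else -1)"

definition A_q :: "'a::{finite,field_gcd} poly \<Rightarrow> 'a poly set" where
  "A_q M = {(A ^ 2 + [:0, 1:] * B ^ 2) mod M | A B. True}"

definition A_qh :: "'a::{finite,field_gcd} poly list \<Rightarrow> 'a poly \<Rightarrow> 'a poly set" where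
  "A_qh hs M = {f mod M | f. \<forall>i<length hs. (f + hs ! i) mod M \<in> A_q M}"

definition delta_qh :: "'a::{finite,field_gcd} poly list \<Rightarrow> 'a poly \<Rightarrow> real" where
  "delta_qh hs P = lim (\<lambda>n. real (card (A_qh hs (P ^ n))) / absP P ^ n)"

definition nu_h :: "'a::{finite,field_gcd} poly list \<Rightarrow> 'a poly \<Rightarrow> nat" where
  "nu_h hs P = Max ({multiplicity P (hs ! i - hs ! j) | i j.
                      i < length hs \<and> j < length hs \<and> i \<noteq> j} \<union> {0})"

definition Omega_qh :: "'a::{finite,field_gcd} poly list \<Rightarrow> 'a poly \<Rightarrow> 'a poly set" where
  "Omega_qh hs M = {f \<in> A_qh hs M. \<exists>i<length hs. (f + hs ! i) mod M = 0}"

definition Omega_star_qh :: "'a::{finite,field_gcd} poly list \<Rightarrow> 'a poly \<Rightarrow> 'a poly set" where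
  "Omega_star_qh hs M = {f \<in> A_qh hs M. \<forall>i<length hs. (f + hs ! i) mod M \<noteq> 0}"

end

theory Submission
  imports Defs
begin

lemma even_card_invol:
  assumes "finite A" "\<forall>x\<in>A. f x \<in> A \<and> f x \<noteq> x \<and> f (f x) = x"
  shows "even (card A)"
  using assms
proof (induction "card A" arbitrary: A rule: less_induct)
  case less
  show ?case
  proof (cases "A = {}")
    case True then show ?thesis by simp
  next
    case False
    then obtain x where x: "x \<in> A" by auto
    let ?B = "A - {x, f x}"
    have fx: "f x \<in> A" "f x \<noteq> x" using less.prems x by auto
    have cB: "card ?B = card A - 2" using less.prems(1) x fx by (simp add: card_Diff_subset)
    have c2: "card {x, f x} = 2" using fx(2) by simp
    have "card {x, f x} \<le> card A" by (rule card_mono) (use less.prems(1) x fx in auto)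
    hence "card A \<ge> 2" using c2 by simp
    hence lt: "card ?B < card A" using cB by simp
    have ffx: "f (f x) = x" using less.prems x by auto
    have "\<forall>y\<in>?B. f y \<in> ?B \<and> f y \<noteq> y \<and> f (f y) = y"
    proof
      fix y assume y: "y \<in> ?B"
      hence yA: "y \<in> A" "y \<noteq> x" "y \<noteq> f x" by auto
      from less.prems(2) yA(1) have "f y \<in> A" "f y \<noteq> y" "f (f y) = y" by auto
      moreover have "f y \<noteq> x" using \<open>f (f y) = y\<close> yA(3) by auto
      moreover have "f y \<noteq> f x" using \<open>f (f y) = y\<close> ffx yA(2) by metis
      ultimately show "f y \<in> ?B \<and> f y \<noteq> y \<and> f (f y) = y" by auto
    qed
    hence "even (card ?B)" using less.hyps[OF lt] less.prems(1) by auto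
    moreover have "card A = card ?B + 2" using cB \<open>card A \<ge> 2\<close> by simp
    ultimately show ?thesis by simp
  qed
qed

lemma two_ne_zero_field:
  assumes "odd CARD('a::{finite,field})" shows "(2::'a) \<noteq> 0"
proof
  assume h: "(2::'a) = 0"
  have "even (card (UNIV::'a set))"
  proof (rule even_card_invol[where f="\<lambda>x. x + 1"])
    show "finite (UNIV::'a set)" by simp
    show "\<forall>x\<in>UNIV. x + 1 \<in> UNIV \<and> x + 1 \<noteq> x \<and> x + 1 + 1 = (x::'a)"
    proof
      fix x :: 'a
      have "x + 1 + 1 = x + 2" by (simp add: add.assoc)
      also have "\<dots> = x" using h by simp
      finally show "x + 1 \<in> UNIV \<and> x + 1 \<noteq> x \<and> x + 1 + 1 = x" by simp
    qed
  qed
  with assms show False by simp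
qed

definition Dm :: "nat \<Rightarrow> 'a::zero poly set" where
  "Dm m = {r. \<forall>i\<ge>m. coeff r i = 0}"

lemma Dm_iff: "r \<in> Dm m \<longleftrightarrow> r = 0 \<or> degree r < m"
proof (cases "r = 0")
  case True thus ?thesis by (simp add: Dm_def)
next
  case False
  have 1: "degree r < m" if "r \<in> Dm m"
  proof (rule ccontr)
    assume "\<not> degree r < m"
    hence "coeff r (degree r) = 0" using that by (simp add: Dm_def)
    thus False using False by simp
  qed
  have 2: "r \<in> Dm m" if "degree r < m" using that by (auto simp: Dm_def intro: coeff_eq_0)
  show ?thesis using 1 2 False by blast
qed

lemma Dm_Suc: "Dm (Suc m) = (\<lambda>(a,p). pCons a p) ` (UNIV \<times> Dm m)"
proof safe
  fix r :: "'a poly" assume r: "r \<in> Dm (Suc m)"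
  obtain a p where rp: "r = pCons a p" by (cases r) auto
  have "\<forall>i\<ge>m. coeff p i = 0"
  proof (intro allI impI)
    fix i assume "i \<ge> m"
    hence "coeff r (Suc i) = 0" using r by (simp add: Dm_def)
    thus "coeff p i = 0" by (simp add: rp)
  qed
  hence "p \<in> Dm m" by (simp add: Dm_def)
  thus "r \<in> (\<lambda>(a,p). pCons a p) ` (UNIV \<times> Dm m)" using rp by auto
next
  fix a :: 'a and p :: "'a poly" assume "p \<in> Dm m"
  thus "pCons a p \<in> Dm (Suc m)" unfolding Dm_def by (auto simp: coeff_pCons split: nat.splits)
qed

lemma Dm_0: "Dm 0 = {0}"
  unfolding Dm_def by (auto intro: poly_eqI)

lemma card_Dm: "finite (Dm m :: 'a::{finite,zero} poly set) \<and> card (Dm m :: 'a poly set) = CARD('a) ^ m"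
proof (induction m)
  case 0 then show ?case by (simp add: Dm_0)
next
  case (Suc m)
  have inj: "inj_on (\<lambda>(a,p). pCons a p) (UNIV \<times> (Dm m :: 'a poly set))"
    by (auto simp: inj_on_def)
  show ?case using Suc unfolding Dm_Suc
    by (simp add: card_image[OF inj] card_cartesian_product)
qed

definition Res :: "'a::field poly \<Rightarrow> 'a poly set" where
  "Res M = range (\<lambda>f. f mod M)"

lemma Res_iff: fixes r M :: "'a::field poly" shows "r \<in> Res M \<longleftrightarrow> r mod M = r"
proof
  assume "r \<in> Res M" thus "r mod M = r" by (auto simp: Res_def)
next
  assume h: "r mod M = r"
  show "r \<in> Res M" unfolding Res_def by (rule image_eqI[of _ _ r]) (use h in auto)
qed

lemma Res_eq_Dm: fixes M :: "'a::field poly" assumes "M \<noteq> 0" shows "Res M = Dm (degree M)"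
proof safe
  fix r assume "r \<in> Res M"
  then obtain f where "r = f mod M" unfolding Res_def by auto
  thus "r \<in> Dm (degree M)" using assms by (auto simp: Dm_iff intro: degree_mod_less')
next
  fix r :: "'a poly" assume "r \<in> Dm (degree M)"
  thus "r \<in> Res M" unfolding Res_iff Dm_iff by (auto intro: mod_poly_less)
qed

definition rep :: "'a::field poly \<Rightarrow> 'a poly \<Rightarrow> bool" where
  "rep M g \<longleftrightarrow> (\<exists>A B. M dvd g - (A^2 + [:0,1:]*B^2))"

lemma mod_in_A_q: "x mod M \<in> A_q M \<longleftrightarrow> rep M (x :: 'a::{finite,field_gcd} poly)"
  unfolding A_q_def rep_def by (auto simp: mod_eq_dvd_iff)

lemma rep_cong: "M dvd g - g' \<Longrightarrow> rep M g \<Longrightarrow> rep M g'"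
proof -
  assume d: "M dvd g - g'" and r: "rep M g"
  then obtain A B where AB: "M dvd g - (A^2 + [:0,1:]*B^2)" unfolding rep_def by auto
  define X where "X = A^2 + [:0,1:]*B^2"
  have eq: "(g - X) - (g - g') = g' - X" by simp
  have "M dvd (g - X) - (g - g')" using dvd_diff[OF AB d] unfolding X_def .
  hence "M dvd g' - X" by (simp only: eq)
  thus ?thesis unfolding rep_def X_def by blast
qed

lemma rep_mono: "M' dvd M \<Longrightarrow> rep M g \<Longrightarrow> rep M' g"
  unfolding rep_def using dvd_trans by blast

lemma rep_0: "M dvd g \<Longrightarrow> rep M g"
  unfolding rep_def by (rule exI[of _ 0], rule exI[of _ 0]) simp

lemma A_qh_mem: "r \<in> A_qh hs M \<longleftrightarrow> r mod M = r \<and> (\<forall>i<length hs. rep M (r + hs!i))"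
proof
  assume "r \<in> A_qh hs M"
  then obtain f where f: "r = f mod M" "\<forall>i<length hs. (f + hs!i) mod M \<in> A_q M"
    unfolding A_qh_def by auto
  show "r mod M = r \<and> (\<forall>i<length hs. rep M (r + hs!i))"
  proof safe
    show "r mod M = r" using f by simp
    fix i assume i: "i < length hs"
    hence "rep M (f + hs!i)" using f mod_in_A_q by blast
    moreover have "M dvd (f + hs!i) - (r + hs!i)" using f by (simp add: mod_eq_dvd_iff[symmetric] mod_simps)
    ultimately show "rep M (r + hs!i)" by (rule rep_cong[rotated])
  qed
next
  assume h: "r mod M = r \<and> (\<forall>i<length hs. rep M (r + hs!i))"
  hence "r = r mod M \<and> (\<forall>i<length hs. (r + hs!i) mod M \<in> A_q M)" using mod_in_A_q by metis
  thus "r \<in> A_qh hs M" unfolding A_qh_def mem_Collect_eq by blast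
qed


lemma hensel_step:
  fixes P :: "'a::field_gcd poly"
  assumes P: "prime_elem P" and two: "(2::'a) \<noteq> 0" and nd: "\<not> P dvd c * z" and n: "n \<ge> 1"
    and d: "P^n dvd g - (c * z^2 + r)"
  shows "\<exists>z'. P^(n+1) dvd (g + P^n * t) - (c * z'^2 + r)"
proof -
  obtain w where w: "g - (c*z^2 + r) = P^n * w" using d by (auto elim: dvdE)
  have u2: "is_unit (2::'a poly)"
  proof -
    have "(1::'a) = 2 * inverse 2" using two by simp
    hence "is_unit (2::'a)" by (rule dvdI)
    hence c: "is_unit [:(2::'a):]" unfolding is_unit_const_poly_iff .
    have e: "[:(2::'a):] = 2" by (simp add: numeral_poly)
    from c e show ?thesis by metis
  qed
  have "\<not> P dvd 2 * (c*z)"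
  proof
    assume "P dvd 2 * (c*z)"
    hence "P dvd 2 \<or> P dvd c*z" using P prime_elem_dvd_mult_iff by blast
    moreover have "\<not> P dvd 2" using u2 P by (meson dvd_unit_imp_unit prime_elem_not_unit)
    ultimately show False using nd by blast
  qed
  hence cop: "coprime P (2 * (c*z))" using P prime_elem_imp_coprime by blast
  obtain u v where uv: "u * (2*(c*z)) + v * P = 1"
  proof -
    obtain x y where "bezout_coefficients P (2*(c*z)) = (x, y)" by (cases "bezout_coefficients P (2*(c*z))")
    hence "x * P + y * (2*(c*z)) = gcd P (2*(c*z))" by (rule bezout_coefficients)
    also have "\<dots> = 1" using cop by simp
    finally show ?thesis using that[of y x] by (simp add: add.commute)
  qed
  define a where "a = (w + t) * u"
  have E: "(g + P^n*t) - (c*(z + P^n*a)^2 + r) = P^n * ((w+t) * (1 - 2*c*z*u) - c*(P^n*a^2))"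
  proof -
    have g: "g = P^n * w + (c*z^2 + r)" using w by (simp add: algebra_simps)
    show ?thesis unfolding g a_def by (simp add: algebra_simps power2_eq_square)
  qed
  have "P dvd (w+t) * (1 - 2*c*z*u) - c*(P^n*a^2)"
  proof (rule dvd_diff)
    have "1 - 2*c*z*u = v * P" using uv by (simp add: algebra_simps)
    thus "P dvd (w+t) * (1 - 2*c*z*u)" by simp
    have "P dvd P^n" using n by (simp add: dvd_power)
    thus "P dvd c*(P^n*a^2)" by simp
  qed
  hence "P^n * P dvd (g + P^n*t) - (c*(z + P^n*a)^2 + r)" unfolding E by (rule mult_dvd_mono[OF dvd_refl])
  thus ?thesis by (metis power_Suc2 Suc_eq_plus1)
qed

lemma dvd_cancel_pow:
  fixes P :: "'a::field_gcd poly"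
  assumes "P \<noteq> 0" "P^k * Q dvd P^k * X" shows "Q dvd X"
  using assms by simp

lemma K_lemma:
  fixes P :: "'a::field_gcd poly"
  assumes P: "prime_elem P" and two: "(2::'a) \<noteq> 0" and PT: "P = [:0,1:] \<or> \<not> P dvd [:0,1:]"
  shows "n \<ge> 1 \<Longrightarrow> \<not> P^n dvd g \<Longrightarrow> rep (P^n) g \<Longrightarrow> rep (P^(n+1)) (g + P^n*t)"
proof (induction n arbitrary: g t rule: less_induct)
  case (less n)
  have P0: "P \<noteq> 0" using P by auto
  obtain A B where AB: "P^n dvd g - (A^2 + [:0,1:]*B^2)" using less.prems(3) unfolding rep_def by blast
  show ?case
  proof (cases "P dvd A")
    case False
    hence "\<not> P dvd 1 * A" by simp
    from hensel_step[OF P two this less.prems(1), of g "[:0,1:]*B^2" t] obtain z' where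
      "P^(n+1) dvd g + P^n*t - (1*z'^2 + [:0,1:]*B^2)" using AB by auto
    thus ?thesis unfolding rep_def by auto
  next
    case PA: True
    then obtain A1 where A1: "A = P*A1" by (auto elim: dvdE)
    show ?thesis
    proof (cases "P dvd B")
      case nB: False
      show ?thesis
      proof (cases "P = [:0,1:]")
        case False
        hence "\<not> P dvd [:0,1:]" using PT by auto
        hence "\<not> P dvd [:0,1:]*B" using nB P prime_elem_dvd_mult_iff by blast
        moreover have "P^n dvd g - ([:0,1:]*B^2 + A^2)" using AB by (simp add: add.commute)
        ultimately obtain z' where "P^(n+1) dvd g + P^n*t - ([:0,1:]*z'^2 + A^2)"
          using hensel_step[OF P two _ less.prems(1)] by blast
        thus ?thesis unfolding rep_def by (metis add.commute)
      next
        case PeqT: True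
        have X: "A^2 + [:0,1:]*B^2 = P*(1*B^2 + P*A1^2)" using PeqT A1 by (simp add: algebra_simps power2_eq_square)
        have Pdvd: "P dvd P^n" using less.prems(1) by (simp add: dvd_power)
        hence "P dvd g - P*(1*B^2 + P*A1^2)" using AB X dvd_trans by metis
        hence Pg: "P dvd g" by (metis dvd_diff_commute dvd_triv_left dvd_diff dvd_add_right_iff diff_add_cancel)
        then obtain g1 where g1: "g = P*g1" by (auto elim: dvdE)
        have n2: "n \<ge> 2"
        proof (rule ccontr)
          assume "\<not> n \<ge> 2"
          hence "n = 1" using less.prems(1) by auto
          thus False using Pg less.prems(2) by simp
        qed
        have pn: "P^n = P * P^(n-1)" using n2 by (metis Suc_diff_1 less_le_trans pos2 power_Suc)
        have "P * P^(n-1) dvd P * (g1 - (1*B^2 + P*A1^2))" using AB X g1 pn by (simp add: algebra_simps)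
        hence "P^(n-1) dvd g1 - (1*B^2 + P*A1^2)" using P0 by simp
        moreover have "\<not> P dvd 1 * B" using nB by simp
        moreover have "n - 1 \<ge> 1" using n2 by simp
        ultimately obtain z' where z': "P^(n-1+1) dvd g1 + P^(n-1)*t - (1*z'^2 + P*A1^2)"
          using hensel_step[OF P two] by blast
        hence "P * P^(n-1+1) dvd P * (g1 + P^(n-1)*t - (1*z'^2 + P*A1^2))" by simp
        moreover have "P * P^(n-1+1) = P^(n+1)" using n2 by (simp add: pn)
        moreover have "P * (g1 + P^(n-1)*t - (1*z'^2 + P*A1^2)) = g + P^n*t - (A^2 + [:0,1:]*z'^2)"
          using g1 pn A1 PeqT by (simp add: algebra_simps power2_eq_square)
        ultimately show ?thesis unfolding rep_def by metis
      qed
    next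
      case PB: True
      then obtain B1 where B1: "B = P*B1" by (auto elim: dvdE)
      have X: "A^2 + [:0,1:]*B^2 = P^2 * (A1^2 + [:0,1:]*B1^2)" using A1 B1 by (simp add: algebra_simps power2_eq_square)
      have n3: "n \<ge> 3"
      proof (rule ccontr)
        assume "\<not> n \<ge> 3"
        hence "P^n dvd P^2" by (simp add: le_imp_power_dvd)
        hence "P^n dvd A^2 + [:0,1:]*B^2" unfolding X by (rule dvd_mult2)
        hence "P^n dvd g" using AB by (metis diff_add_cancel dvd_add)
        thus False using less.prems(2) by simp
      qed
      have e: "2 + (n-2) = n" using n3 by simp
      have pn: "P^n = P^2 * P^(n-2)" by (simp only: power_add[symmetric] e)
      have "P^2 dvd g - P^2 * (A1^2 + [:0,1:]*B1^2)" using AB X pn by (metis dvd_mult_left)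
      hence "P^2 dvd g" by (metis diff_add_cancel dvd_add dvd_triv_left)
      then obtain g1 where g1: "g = P^2*g1" by (auto elim: dvdE)
      have "P^2 * P^(n-2) dvd P^2 * (g1 - (A1^2 + [:0,1:]*B1^2))" using AB X g1 pn by (simp add: algebra_simps)
      hence d1: "P^(n-2) dvd g1 - (A1^2 + [:0,1:]*B1^2)" using P0 by simp
      have nd1: "\<not> P^(n-2) dvd g1"
      proof
        assume "P^(n-2) dvd g1"
        hence "P^2 * P^(n-2) dvd P^2 * g1" by simp
        thus False using less.prems(2) g1 pn by simp
      qed
      have repg1: "rep (P^(n-2)) g1" using d1 unfolding rep_def by blast
      have lt: "n - 2 < n" and ge1: "1 \<le> n - 2" using n3 by auto
      have "rep (P^(n-2+1)) (g1 + P^(n-2)*t)" using less.IH[OF lt ge1 nd1 repg1] .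
      then obtain A' B' where AB': "P^(n-2+1) dvd g1 + P^(n-2)*t - (A'^2 + [:0,1:]*B'^2)" unfolding rep_def by auto
      hence "P^2 * P^(n-2+1) dvd P^2 * (g1 + P^(n-2)*t - (A'^2 + [:0,1:]*B'^2))" by simp
      moreover have e2: "2 + (n-2+1) = n+1" using n3 by simp
      moreover have "P^2 * P^(n-2+1) = P^(n+1)" by (simp only: power_add[symmetric] e2)
      moreover have "P^2 * (g1 + P^(n-2)*t - (A'^2 + [:0,1:]*B'^2)) = g + P^n*t - ((P*A')^2 + [:0,1:]*(P*B')^2)"
        using g1 pn by (simp add: algebra_simps power2_eq_square)
      ultimately show ?thesis unfolding rep_def by metis
    qed
  qed
qed


lemma finite_Res: "M \<noteq> 0 \<Longrightarrow> finite (Res (M::'a::{finite,field_gcd} poly))"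
  using Res_eq_Dm card_Dm by metis

lemma card_Res: "M \<noteq> 0 \<Longrightarrow> card (Res (M::'a::{finite,field_gcd} poly)) = CARD('a) ^ degree M"
  using Res_eq_Dm card_Dm by metis

lemma Res_lt: assumes "M \<noteq> 0" "r \<in> Res M" "r \<noteq> 0" shows "degree r < degree M"
  using assms Res_eq_Dm Dm_iff by metis

lemma Res_intro: assumes "r = 0 \<or> degree r < degree M" shows "r \<in> Res M"
  using assms unfolding Res_iff by (auto intro: mod_poly_less)

lemma fiber_count:
  fixes P :: "'a::{finite,field_gcd} poly"
  assumes P0: "P \<noteq> 0" and X: "X \<subseteq> Res (P^(n+1))"
  shows "card X = (\<Sum>s\<in>Res (P^n). card {t \<in> Res P. s + P^n * t \<in> X})"
proof -
  let ?S = "Sigma (Res (P^n)) (\<lambda>s. {t \<in> Res P. s + P^n * t \<in> X})"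
  have "P^n \<noteq> 0" using P0 by simp
  hence f1: "finite (Res (P^n))" "finite (Res P)" using finite_Res[of "P^n"] finite_Res[OF P0] by auto
  have c1: "card ?S = (\<Sum>s\<in>Res (P^n). card {t \<in> Res P. s + P^n * t \<in> X})"
    using f1 by (subst card_SigmaI) auto
  have Pn0: "P^n \<noteq> 0" using P0 by simp
  have "bij_betw (\<lambda>(s,t). s + P^n * t) ?S X"
  proof (rule bij_betw_imageI)
    show "inj_on (\<lambda>(s,t). s + P^n * t) ?S"
    proof (rule inj_onI, clarsimp)
      fix s t s' t'
      assume s: "s \<in> Res (P^n)" and s': "s' \<in> Res (P^n)" and eq: "s + P^n * t = s' + P^n * t'"
      have "(s + P^n * t) mod P^n = s" using s by (simp add: Res_iff)
      moreover have "(s' + P^n * t') mod P^n = s'" using s' by (simp add: Res_iff)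
      ultimately have "s = s'" using eq by simp
      with eq have "P^n * t = P^n * t'" by simp
      thus "s = s' \<and> t = t'" using Pn0 P0 \<open>s = s'\<close> by simp
    qed
    show "(\<lambda>(s,t). s + P^n * t) ` ?S = X"
    proof
      show "(\<lambda>(s,t). s + P^n * t) ` ?S \<subseteq> X" by auto
      show "X \<subseteq> (\<lambda>(s,t). s + P^n * t) ` ?S"
      proof
        fix x assume xX: "x \<in> X"
        define s where "s = x mod P^n"
        define t where "t = x div P^n"
        have xst: "x = s + P^n * t" unfolding s_def t_def by (simp add: add.commute mult.commute)
        have sR: "s \<in> Res (P^n)" unfolding s_def Res_def by auto
        have tR: "t \<in> Res P"
        proof (cases "t = 0")
          case True thus ?thesis by (simp add: Res_iff)
        next
          case False
          have x0: "x \<noteq> 0" using False unfolding t_def by auto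
          have xR: "x \<in> Res (P^(n+1))" using xX X by auto
          have dP: "degree (P^(n+1)) = (n+1) * degree P" by (rule degree_power_eq[OF P0])
          have Pn10: "P^(n+1) \<noteq> 0" using P0 by simp
          have dx: "degree x < (n+1) * degree P" using Res_lt[OF Pn10 xR x0] unfolding dP .
          have dPt: "degree (P^n * t) = n * degree P + degree t"
            using False P0 by (simp add: degree_mult_eq degree_power_eq)
          have "degree x = degree (P^n * t)"
          proof (cases "s = 0")
            case True thus ?thesis using xst by simp
          next
            case False
            have "degree s < degree (P^n)" using Res_lt[OF Pn0 sR False] .
            hence "degree s < degree (P^n * t)" using dPt P0 by (simp add: degree_power_eq)
            thus ?thesis using xst by (simp add: degree_add_eq_right)
          qed
          hence "degree t < degree P" using dx dPt by simp
          thus ?thesis by (intro Res_intro) simp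
        qed
        show "x \<in> (\<lambda>(s,t). s + P^n * t) ` ?S"
          using xX sR tR xst by (auto intro!: image_eqI[of _ _ "(s,t)"])
      qed
    qed
  qed
  hence "card ?S = card X" by (rule bij_betw_same_card)
  thus ?thesis using c1 by simp
qed

lemma card_shift:
  fixes P :: "'a::{finite,field_gcd} poly"
  shows "card {t \<in> Res P. Q ((u + t) mod P)} = card {t \<in> Res P. Q t}"
proof (rule bij_betw_same_card[of "\<lambda>t. (u + t) mod P"], rule bij_betw_imageI)
  show "inj_on (\<lambda>t. (u + t) mod P) {t \<in> Res P. Q ((u + t) mod P)}"
  proof (rule inj_onI)
    fix t t' assume "t \<in> {t \<in> Res P. Q ((u + t) mod P)}" "t' \<in> {t \<in> Res P. Q ((u + t) mod P)}"
      and eq: "(u + t) mod P = (u + t') mod P"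
    hence tt: "t mod P = t" "t' mod P = t'" by (auto simp: Res_iff)
    from eq have "P dvd (u+t) - (u+t')" by (simp add: mod_eq_dvd_iff)
    hence "P dvd t - t'" by simp
    hence "t mod P = t' mod P" by (simp add: mod_eq_dvd_iff)
    thus "t = t'" using tt by simp
  qed
  show "(\<lambda>t. (u + t) mod P) ` {t \<in> Res P. Q ((u + t) mod P)} = {t \<in> Res P. Q t}"
  proof
    show "(\<lambda>t. (u + t) mod P) ` {t \<in> Res P. Q ((u + t) mod P)} \<subseteq> {t \<in> Res P. Q t}"
      by (auto simp: Res_def)
    show "{t \<in> Res P. Q t} \<subseteq> (\<lambda>t. (u + t) mod P) ` {t \<in> Res P. Q ((u + t) mod P)}"
    proof
      fix t' assume t': "t' \<in> {t \<in> Res P. Q t}"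
      define t where "t = (t' - u) mod P"
      have "(u + t) mod P = (u + (t' - u)) mod P" unfolding t_def by (simp add: mod_simps)
      also have "\<dots> = t'" using t' by (simp add: Res_iff)
      finally have e: "(u + t) mod P = t'" .
      have "t \<in> Res P" unfolding t_def Res_def by auto
      thus "t' \<in> (\<lambda>t. (u + t) mod P) ` {t \<in> Res P. Q ((u + t) mod P)}"
        using e t' by (auto intro!: image_eqI[of _ _ t])
    qed
  qed
qed

lemma card_le_2_image:
  assumes "finite A" and fib: "\<And>x y. x \<in> A \<Longrightarrow> y \<in> A \<Longrightarrow> f x = f y \<Longrightarrow> y = x \<or> y = g x"
  shows "card A \<le> 2 * card (f ` A)"
proof -
  define h where "h = inv_into A f"
  have "A \<subseteq> h ` (f ` A) \<union> (g \<circ> h) ` (f ` A)"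
  proof
    fix a assume a: "a \<in> A"
    have ha: "h (f a) \<in> A" "f (h (f a)) = f a" unfolding h_def using a by (auto intro: inv_into_into f_inv_into_f)
    hence "a = h (f a) \<or> a = g (h (f a))" using fib[OF ha(1) a] by auto
    thus "a \<in> h ` (f ` A) \<union> (g \<circ> h) ` (f ` A)" using a by auto
  qed
  hence "card A \<le> card (h ` (f ` A) \<union> (g \<circ> h) ` (f ` A))" by (rule card_mono[rotated]) (use assms in auto)
  also have "\<dots> \<le> card (h ` (f ` A)) + card ((g \<circ> h) ` (f ` A))" by (rule card_Un_le)
  also have "\<dots> \<le> card (f ` A) + card (f ` A)" by (intro add_mono card_image_le) (use assms in auto)
  finally show ?thesis by simp
qed


lemma inv_mod:
  fixes P :: "'a::field_gcd poly"
  assumes P: "prime_elem P" and nd: "\<not> P dvd y"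
  shows "\<exists>v. P dvd y * v - 1"
proof -
  have cop: "coprime P y" using P nd prime_elem_imp_coprime by blast
  obtain a b where "bezout_coefficients P y = (a, b)" by (cases "bezout_coefficients P y")
  hence "a * P + b * y = gcd P y" by (rule bezout_coefficients)
  also have "\<dots> = 1" using cop by simp
  finally have "y * b - 1 = P * (- a)" by (simp add: algebra_simps)
  thus ?thesis by (intro exI[of _ b]) simp
qed

lemma sq_fib:
  fixes P :: "'a::field_gcd poly"
  assumes P: "prime_elem P" and x: "x \<in> Res P" and z: "z \<in> Res P" and d: "P dvd x^2 - z^2"
  shows "z = x \<or> z = (-x) mod P"
proof -
  have "x^2 - z^2 = (x - z) * (x + z)" by (simp add: algebra_simps power2_eq_square)
  hence "P dvd x - z \<or> P dvd x + z" using d P prime_elem_dvd_mult_iff by metis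
  thus ?thesis
  proof
    assume "P dvd x - z"
    hence "x mod P = z mod P" by (simp add: mod_eq_dvd_iff)
    thus ?thesis using x z by (simp add: Res_iff)
  next
    assume "P dvd x + z"
    hence "P dvd z - (-x)" by (simp add: add.commute)
    hence "z mod P = (-x) mod P" by (simp only: mod_eq_dvd_iff)
    thus ?thesis using z Res_iff by metis
  qed
qed

lemma surj_mod_P:
  fixes P :: "'a::{finite,field_gcd} poly"
  assumes P: "prime_elem P" and nT: "\<not> P dvd [:0,1:]" and odd: "odd (card (Res P))"
  shows "rep P u"
proof -
  have P0: "P \<noteq> 0" using P by auto
  have fin: "finite (Res P)" using finite_Res[OF P0] .
  define S1 where "S1 = (\<lambda>x. x^2 mod P) ` Res P"
  define S2 where "S2 = (\<lambda>y. (u - [:0,1:]*y^2) mod P) ` Res P"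
  have c1: "card (Res P) \<le> 2 * card S1" unfolding S1_def
  proof (rule card_le_2_image[OF fin, where g="\<lambda>x. (-x) mod P"])
    fix x z assume xz: "x \<in> Res P" "z \<in> Res P" "x^2 mod P = z^2 mod P"
    hence "P dvd x^2 - z^2" by (simp add: mod_eq_dvd_iff)
    thus "z = x \<or> z = (-x) mod P" using sq_fib[OF P xz(1,2)] by blast
  qed
  have c2: "card (Res P) \<le> 2 * card S2" unfolding S2_def
  proof (rule card_le_2_image[OF fin, where g="\<lambda>x. (-x) mod P"])
    fix x z assume xz: "x \<in> Res P" "z \<in> Res P" "(u - [:0,1:]*x^2) mod P = (u - [:0,1:]*z^2) mod P"
    hence "P dvd (u - [:0,1:]*x^2) - (u - [:0,1:]*z^2)" by (simp only: mod_eq_dvd_iff)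
    moreover have "(u - [:0,1:]*x^2) - (u - [:0,1:]*z^2) = [:0,1:] * (z^2 - x^2)" by (simp add: algebra_simps)
    ultimately have "P dvd [:0,1:] * (z^2 - x^2)" by simp
    hence "P dvd z^2 - x^2" using nT P prime_elem_dvd_mult_iff by blast
    hence "x = z \<or> x = (-z) mod P" using sq_fib[OF P xz(2,1)] by blast
    thus "z = x \<or> z = (-x) mod P"
    proof
      assume "x = (-z) mod P"
      hence "(-x) mod P = (- ((-z) mod P)) mod P" by simp
      also have "\<dots> = z mod P" by (simp add: mod_simps)
      also have "\<dots> = z" using xz(2) by (simp add: Res_iff)
      finally show ?thesis by simp
    qed auto
  qed
  have sub1: "S1 \<subseteq> Res P" and sub2: "S2 \<subseteq> Res P" unfolding S1_def S2_def Res_def by auto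
  have "S1 \<inter> S2 \<noteq> {}"
  proof
    assume dis: "S1 \<inter> S2 = {}"
    have "card (S1 \<union> S2) = card S1 + card S2"
      using dis fin sub1 sub2 by (intro card_Un_disjoint) (auto intro: finite_subset)
    moreover have "card (S1 \<union> S2) \<le> card (Res P)" using sub1 sub2 fin by (intro card_mono) auto
    ultimately show False using c1 c2 odd by presburger
  qed
  then obtain x y where "x^2 mod P = (u - [:0,1:]*y^2) mod P" unfolding S1_def S2_def by auto
  hence "P dvd x^2 - (u - [:0,1:]*y^2)" by (simp only: mod_eq_dvd_iff)
  hence "P dvd - (x^2 - (u - [:0,1:]*y^2))" by (simp only: dvd_minus_iff)
  moreover have "- (x^2 - (u - [:0,1:]*y^2)) = u - (x^2 + [:0,1:]*y^2)" by (simp add: algebra_simps)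
  ultimately show ?thesis unfolding rep_def by metis
qed

lemma aniso_step:
  fixes P :: "'a::field_gcd poly"
  assumes P: "prime_elem P" and an: "\<forall>x. \<not> P dvd x^2 + [:0,1:]"
    and d: "P dvd x^2 + [:0,1:]*y^2"
  shows "P dvd x \<and> P dvd y"
proof -
  have Py: "P dvd y"
  proof (rule ccontr)
    assume "\<not> P dvd y"
    then obtain vv where v: "P dvd y * vv - 1" using inv_mod[OF P] by blast
    have "(x * vv)^2 + [:0,1:] = vv^2 * (x^2 + [:0,1:] * y^2) - [:0,1:] * (y * vv + 1) * (y * vv - 1)"
      by (simp add: algebra_simps power2_eq_square)
    moreover have "P dvd vv^2 * (x^2 + [:0,1:] * y^2) - [:0,1:] * (y * vv + 1) * (y * vv - 1)"
    proof (rule dvd_diff)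
      show "P dvd vv^2 * (x^2 + [:0,1:] * y^2)" using d by (rule dvd_mult)
      show "P dvd [:0,1:] * (y * vv + 1) * (y * vv - 1)" using v by (rule dvd_mult)
    qed
    ultimately show False using an by metis
  qed
  hence "P dvd y * y" by (rule dvd_mult2)
  hence "P dvd [:0,1:]*(y*y)" by (rule dvd_mult)
  hence "P dvd [:0,1:]*y^2" by (simp only: power2_eq_square)
  moreover have "x^2 = (x^2 + [:0,1:]*y^2) - [:0,1:]*y^2" by simp
  ultimately have "P dvd x^2" using d dvd_diff by metis
  hence "P dvd x" using P prime_elem_dvd_power by blast
  thus ?thesis using Py by simp
qed

lemma aniso:
  fixes P :: "'a::field_gcd poly"
  assumes P: "prime_elem P" and an: "\<forall>x. \<not> P dvd x^2 + [:0,1:]"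
  shows "P^(2*m+1) dvd x^2 + [:0,1:]*y^2 \<Longrightarrow> P^(m+1) dvd x \<and> P^(m+1) dvd y"
proof (induction m arbitrary: x y)
  case 0
  hence "P dvd x^2 + [:0,1:]*y^2" by simp
  hence "P dvd x \<and> P dvd y" by (rule aniso_step[OF P an])
  thus ?case by simp
next
  case (Suc m)
  have P0: "P \<noteq> 0" using P by auto
  have "P dvd P^(2 * Suc m + 1)" by (simp add: dvd_power)
  hence "P dvd x^2 + [:0,1:]*y^2" using Suc.prems dvd_trans by blast
  hence "P dvd x \<and> P dvd y" using aniso_step[OF P an] by blast
  then obtain x1 y1 where xy: "x = P * x1" "y = P * y1" by (auto elim!: dvdE)
  have eq: "x^2 + [:0,1:]*y^2 = P^2 * (x1^2 + [:0,1:]*y1^2)" using xy by (simp add: algebra_simps power2_eq_square)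
  have e: "2 + (2*m+1) = 2 * Suc m + 1" by simp
  have pe: "P^(2 * Suc m + 1) = P^2 * P^(2*m+1)" by (simp only: power_add[symmetric] e)
  have "P^2 * P^(2*m+1) dvd P^2 * (x1^2 + [:0,1:]*y1^2)" using Suc.prems unfolding pe eq .
  moreover have "P^2 \<noteq> 0" using P0 by simp
  ultimately have "P^(2*m+1) dvd x1^2 + [:0,1:]*y1^2" using dvd_times_left_cancel_iff by blast
  hence h: "P^(m+1) dvd x1 \<and> P^(m+1) dvd y1" by (rule Suc.IH)
  have e2: "P^(Suc m + 1) = P * P^(m+1)" by simp
  show ?case unfolding e2 xy using h by (auto intro: mult_dvd_mono)
qed

lemma E_inert_even:
  fixes P :: "'a::{finite,field_gcd} poly"
  assumes P: "prime_elem P" and nT: "\<not> P dvd [:0,1:]" and odd: "odd (card (Res P))" and n: "even n"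
  shows "{t \<in> Res P. rep (P^(n+1)) (P^n * t)} = Res P"
proof -
  obtain m where m: "n = 2*m" using n by (auto elim: evenE)
  have "rep (P^(n+1)) (P^n * t)" for t
  proof -
    obtain A B where AB: "P dvd t - (A^2 + [:0,1:]*B^2)" using surj_mod_P[OF P nT odd] unfolding rep_def by blast
    hence "P^n * P dvd P^n * (t - (A^2 + [:0,1:]*B^2))" by simp
    moreover have pm: "P^n = P^m * P^m" unfolding m by (simp only: mult_2 power_add)
    moreover have "P^n * (t - (A^2 + [:0,1:]*B^2)) = P^n * t - ((P^m*A)^2 + [:0,1:]*(P^m*B)^2)"
      unfolding pm by (simp add: algebra_simps power2_eq_square)
    moreover have "P^(n+1) = P^n * P" by simp
    ultimately have "P^(n+1) dvd P^n * t - ((P^m*A)^2 + [:0,1:]*(P^m*B)^2)" by metis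
    thus ?thesis unfolding rep_def by blast
  qed
  thus ?thesis by auto
qed

lemma E_inert_odd:
  fixes P :: "'a::{finite,field_gcd} poly"
  assumes P: "prime_elem P" and an: "\<forall>x. \<not> P dvd x^2 + [:0,1:]" and n: "odd n"
  shows "{t \<in> Res P. rep (P^(n+1)) (P^n * t)} = {0}"
proof -
  have P0: "P \<noteq> 0" using P by auto
  obtain m where m: "n = 2*m+1" using n by (auto elim: oddE)
  have "P dvd t" if t: "rep (P^(n+1)) (P^n * t)" for t
  proof -
    obtain A B where AB: "P^(n+1) dvd P^n * t - (A^2 + [:0,1:]*B^2)" using t unfolding rep_def by blast
    have "P^n dvd P^(n+1)" by (simp add: le_imp_power_dvd)
    hence "P^n dvd P^n * t - (A^2 + [:0,1:]*B^2)" using AB dvd_trans by blast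
    moreover have "P^n dvd P^n * t" by simp
    moreover have "A^2 + [:0,1:]*B^2 = P^n * t - (P^n * t - (A^2 + [:0,1:]*B^2))" by simp
    ultimately have "P^n dvd A^2 + [:0,1:]*B^2" using dvd_diff by metis
    hence "P^(2*m+1) dvd A^2 + [:0,1:]*B^2" using m by simp
    hence "P^(m+1) dvd A \<and> P^(m+1) dvd B" by (rule aniso[OF P an])
    then obtain a b where ab: "A = P^(m+1) * a" "B = P^(m+1) * b" by (auto elim!: dvdE)
    have e: "(m+1) + (m+1) = n + 1" using m by simp
    have pm: "P^(n+1) = P^(m+1) * P^(m+1)" by (simp only: power_add[symmetric] e)
    have "A^2 + [:0,1:]*B^2 = P^(n+1) * (a^2 + [:0,1:]*b^2)"
      unfolding ab pm by (simp add: algebra_simps power2_eq_square)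
    hence "P^(n+1) dvd A^2 + [:0,1:]*B^2" by simp
    moreover have "P^n * t = (P^n * t - (A^2 + [:0,1:]*B^2)) + (A^2 + [:0,1:]*B^2)" by simp
    ultimately have "P^(n+1) dvd P^n * t" using AB dvd_add by metis
    moreover have "P^(n+1) = P^n * P" by simp
    ultimately have "P^n * P dvd P^n * t" by metis
    thus "P dvd t" using P0 by simp
  qed
  moreover have "t \<in> Res P \<Longrightarrow> P dvd t \<Longrightarrow> t = 0" for t by (metis Res_iff dvd_eq_mod_eq_0)
  moreover have "rep (P^(n+1)) (P^n * 0)" by (simp add: rep_0)
  moreover have "(0::'a poly) \<in> Res P" by (simp add: Res_iff)
  ultimately show ?thesis by blast
qed


lemma T_dvd_iff: "[:0,1:] dvd (f::'a::field poly) \<longleftrightarrow> coeff f 0 = 0"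
  using dvd_iff_poly_eq_0[of 0 f] by (simp add: poly_0_coeff_0)

lemma ram_only:
  fixes c :: "'a::field"
  shows "[:0,1:]^(n+1) dvd [:0,1:]^n * [:c:] - (x^2 + [:0,1:]*y^2) \<Longrightarrow> \<exists>s. c = s^2"
proof (induction n arbitrary: x y)
  case 0
  hence "[:0,1:] dvd [:c:] - (x^2 + [:0,1:]*y^2)" by simp
  hence "coeff ([:c:] - (x^2 + [:0,1:]*y^2)) 0 = 0" using T_dvd_iff by blast
  hence "c = (coeff x 0)^2" by (simp add: coeff_mult_0 power2_eq_square)
  thus ?case by blast
next
  case (Suc n)
  let ?T = "[:0,1:] :: 'a poly"
  have "?T dvd ?T^(Suc n + 1)" by (rule dvd_power) simp
  hence d1: "?T dvd ?T^(Suc n) * [:c:] - (x^2 + ?T*y^2)" using Suc.prems dvd_trans by blast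
  have d2: "?T dvd ?T^(Suc n) * [:c:]" by (intro dvd_mult2 dvd_power) simp
  have "x^2 + ?T*y^2 = ?T^(Suc n) * [:c:] - (?T^(Suc n) * [:c:] - (x^2 + ?T*y^2))" by simp
  hence "?T dvd x^2 + ?T*y^2" using d1 d2 dvd_diff by metis
  hence "coeff (x^2 + ?T*y^2) 0 = 0" using T_dvd_iff by blast
  hence "coeff x 0 * coeff x 0 = 0" by (simp add: coeff_mult_0 power2_eq_square)
  hence "coeff x 0 = 0" by simp
  hence "?T dvd x" using T_dvd_iff by blast
  then obtain x1 where x1: "x = ?T * x1" by (auto elim: dvdE)
  have eq: "?T^(Suc n) * [:c:] - (x^2 + ?T*y^2) = ?T * (?T^n * [:c:] - (y^2 + ?T*x1^2))"
    unfolding x1 by (simp add: algebra_simps power2_eq_square)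
  have "?T^(Suc n + 1) = ?T * ?T^(n+1)" by simp
  hence "?T * ?T^(n+1) dvd ?T * (?T^n * [:c:] - (y^2 + ?T*x1^2))" using Suc.prems eq by metis
  moreover have "?T \<noteq> 0" by simp
  ultimately have "?T^(n+1) dvd ?T^n * [:c:] - (y^2 + ?T*x1^2)" using dvd_times_left_cancel_iff by blast
  thus ?case by (rule Suc.IH)
qed

lemma ram_rep:
  fixes c :: "'a::field"
  shows "rep ([:0,1:]^(n+1)) ([:0,1:]^n * [:c:]) \<longleftrightarrow> (\<exists>s. c = s^2)"
proof
  assume "rep ([:0,1:]^(n+1)) ([:0,1:]^n * [:c:])"
  thus "\<exists>s. c = s^2" unfolding rep_def using ram_only by blast
next
  assume "\<exists>s. c = s^2"
  then obtain s where s: "c = s^2" by blast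
  let ?T = "[:0,1:] :: 'a poly"
  have cs: "[:c:] = [:s:]^2" unfolding s by (simp add: power2_eq_square)
  show "rep (?T^(n+1)) (?T^n * [:c:])"
  proof (cases "even n")
    case True
    then obtain m where m: "n = m + m" by (auto elim: evenE simp: mult_2)
    have "?T^n * [:c:] = (?T^m * [:s:])^2 + ?T * 0^2"
      unfolding m cs by (simp add: power_add power2_eq_square algebra_simps)
    thus ?thesis unfolding rep_def by (metis dvd_0_right diff_self)
  next
    case False
    then obtain m where m: "n = Suc (m + m)" by (auto elim: oddE simp: mult_2)
    have "?T^n * [:c:] = 0^2 + ?T * (?T^m * [:s:])^2"
      unfolding m cs by (simp add: power_add power2_eq_square algebra_simps)
    thus ?thesis unfolding rep_def by (metis dvd_0_right diff_self)
  qed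
qed

lemma card_squares:
  assumes odd: "odd CARD('a::{finite,field})"
  shows "2 * card (range (\<lambda>s::'a. s^2)) = CARD('a) + 1"
proof -
  have two: "(2::'a) \<noteq> 0" using two_ne_zero_field[OF odd] .
  let ?S = "range (\<lambda>s::'a. s^2)"
  have "card (UNIV::'a set) \<le> 2 * card ?S"
    by (rule card_le_2_image[where g=uminus]) (auto simp: power2_eq_iff)
  hence ge: "CARD('a) + 1 \<le> 2 * card ?S" using odd by presburger
  define S0 where "S0 = ?S - {0}"
  define h where "h = (\<lambda>c::'a. SOME s. s^2 = c)"
  have hsq: "(h c)^2 = c" if "c \<in> ?S" for c
    unfolding h_def using that by (auto intro: someI)
  have injh: "inj_on h S0"
    by (rule inj_onI) (metis hsq S0_def DiffD1)
  have injm: "inj_on uminus (h ` S0)" by (auto intro: inj_onI)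
  have disj: "h ` S0 \<inter> uminus ` h ` S0 = {}"
  proof (rule ccontr)
    assume "h ` S0 \<inter> uminus ` h ` S0 \<noteq> {}"
    then obtain c c' where cc: "c \<in> S0" "c' \<in> S0" "h c = - h c'" by auto
    have "c = (h c)^2" using hsq cc(1) S0_def by auto
    also have "\<dots> = (h c')^2" using cc(3) by simp
    also have "\<dots> = c'" using hsq cc(2) S0_def by auto
    finally have "c = c'" .
    hence "h c = - h c" using cc(3) by simp
    hence "2 * h c = 0" by simp
    hence "h c = 0" using two by simp
    hence "c = 0" using hsq cc(1) S0_def by (metis DiffD1 power_zero_numeral)
    thus False using cc(1) S0_def by simp
  qed
  have sub: "h ` S0 \<union> uminus ` h ` S0 \<subseteq> UNIV - {0}"
  proof -
    have "h c \<noteq> 0" if "c \<in> S0" for c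
      using that hsq S0_def by (metis DiffD1 DiffD2 insertI1 power_zero_numeral)
    thus ?thesis by auto
  qed
  have "card (h ` S0 \<union> uminus ` h ` S0) = card S0 + card S0"
    using disj by (subst card_Un_disjoint) (auto simp: card_image injh injm)
  moreover have "card (h ` S0 \<union> uminus ` h ` S0) \<le> card (UNIV - {0::'a})"
    using sub by (intro card_mono) auto
  moreover have "card (UNIV - {0::'a}) = CARD('a) - 1" by (simp add: card_Diff_singleton)
  moreover have "card S0 = card ?S - 1" unfolding S0_def
    by (subst card_Diff_singleton) (auto intro: image_eqI[of _ _ 0])
  moreover have "card ?S \<ge> 1" using ge by simp
  moreover have "CARD('a) \<ge> 1" by (simp add: Suc_leI)
  ultimately have "2 * card ?S \<le> CARD('a) + 1" by linarith
  thus ?thesis using ge by simp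
qed

lemma Res_T: "Res ([:0,1:] :: 'a::field poly) = range (\<lambda>c. [:c:])"
proof -
  have "Res ([:0,1:] :: 'a poly) = Dm 1" using Res_eq_Dm[of "[:0,1:] :: 'a poly"] by simp
  also have "\<dots> = range (\<lambda>c. [:c:])"
  proof safe
    fix r :: "'a poly" assume "r \<in> Dm 1"
    hence "degree r = 0" unfolding Dm_iff by auto
    hence "r = [:coeff r 0:]" by (rule degree_0_id[symmetric])
    thus "r \<in> range (\<lambda>c. [:c:])" by blast
  next
    fix c :: 'a show "[:c:] \<in> Dm 1" unfolding Dm_iff by simp
  qed
  finally show ?thesis .
qed

lemma E_ram:
  fixes T :: "'a::{finite,field_gcd} poly"
  assumes T: "T = [:0,1:]"
  shows "card {t \<in> Res T. rep (T^(n+1)) (T^n * t)} = card (range (\<lambda>s::'a. s^2))"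
proof -
  have "{t \<in> Res T. rep (T^(n+1)) (T^n * t)} = (\<lambda>c. [:c:]) ` range (\<lambda>s::'a. s^2)"
    unfolding T Res_T using ram_rep by fastforce
  thus ?thesis by (simp add: card_image inj_on_def)
qed


lemma Om_iff: "s \<in> Omega_qh hs M \<longleftrightarrow> s \<in> A_qh hs M \<and> (\<exists>i<length hs. M dvd s + hs!i)"
  unfolding Omega_qh_def by (auto simp: dvd_eq_mod_eq_0)

lemma Os_iff: "s \<in> Omega_star_qh hs M \<longleftrightarrow> s \<in> A_qh hs M \<and> (\<forall>i<length hs. \<not> M dvd s + hs!i)"
  unfolding Omega_star_qh_def by (auto simp: dvd_eq_mod_eq_0)

lemma A_qh_Res: "A_qh hs M \<subseteq> Res M"
  using A_qh_mem Res_iff by blast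

lemma A_split: "A_qh hs M = Omega_star_qh hs M \<union> Omega_qh hs M"
  "Omega_star_qh hs M \<inter> Omega_qh hs M = {}"
  by (auto simp: Om_iff Os_iff)

lemma sum_split:
  assumes "finite R" "A \<subseteq> R" "A = X \<union> Y" "X \<inter> Y = {}"
    "\<forall>s\<in>R - A. F s = 0" "\<forall>s\<in>X. F s = a" "\<forall>s\<in>Y. F s = b"
  shows "(\<Sum>s\<in>R. F s) = a * card X + b * (card Y :: nat)"
proof -
  have fA: "finite A" using assms(1,2) finite_subset by blast
  have "(\<Sum>s\<in>R. F s) = (\<Sum>s\<in>A. F s)"
    by (rule sum.mono_neutral_right) (use assms in auto)
  also have "\<dots> = (\<Sum>s\<in>X. F s) + (\<Sum>s\<in>Y. F s)"
    unfolding assms(3) by (rule sum.union_disjoint) (use fA assms(3,4) in auto)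
  also have "(\<Sum>s\<in>X. F s) = a * card X" using assms(6) by (simp add: mult.commute)
  also have "(\<Sum>s\<in>Y. F s) = b * card Y" using assms(7) by (simp add: mult.commute)
  finally show ?thesis .
qed

definition Ecount :: "'a::field poly \<Rightarrow> nat \<Rightarrow> nat" where
  "Ecount P n = card {t \<in> Res P. rep (P^(n+1)) (P^n * t)}"

locale setting =
  fixes P :: "'a::{finite,field_gcd} poly" and hs :: "'a poly list" and nu :: nat
  assumes P: "prime_elem P" and two: "(2::'a) \<noteq> 0" and PT: "P = [:0,1:] \<or> \<not> P dvd [:0,1:]"
    and nu1: "nu \<ge> 1"
    and ndh: "\<And>i j. i < length hs \<Longrightarrow> j < length hs \<Longrightarrow> i \<noteq> j \<Longrightarrow> \<not> P^nu dvd hs!i - hs!j"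
begin

lemma P0: "P \<noteq> 0" using P by auto

lemma uniq:
  assumes n: "n \<ge> nu" and i: "i < length hs" and j: "j < length hs"
    and di: "P^n dvd s + hs!i" and dj: "P^n dvd s + hs!j"
  shows "i = j"
proof (rule ccontr)
  assume ij: "i \<noteq> j"
  have "P^n dvd (s + hs!i) - (s + hs!j)" using di dj by (rule dvd_diff)
  hence "P^n dvd hs!i - hs!j" by simp
  moreover have "P^nu dvd P^n" using n by (rule le_imp_power_dvd)
  ultimately have "P^nu dvd hs!i - hs!j" using dvd_trans by blast
  thus False using ndh[OF i j ij] by simp
qed

lemma lift_Res:
  assumes s: "s \<in> Res (P^n)" and t: "t \<in> Res P"
  shows "s + P^n * t \<in> Res (P^(n+1))"
proof (rule Res_intro)
  have dP: "degree (P^(n+1)) = (n+1) * degree P" by (rule degree_power_eq[OF P0])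
  have dPn: "degree (P^n) = n * degree P" by (rule degree_power_eq[OF P0])
  have "\<not> is_unit P" using P by (rule prime_elem_not_unit)
  hence dpos: "degree P > 0" using is_unit_iff_degree[OF P0] by auto
  have ds: "s = 0 \<or> degree s < n * degree P" using s Res_lt[of "P^n" s] P0 dPn by auto
  have dt: "t = 0 \<or> degree t < degree P" using t Res_lt[of P t] P0 by auto
  show "s + P^n * t = 0 \<or> degree (s + P^n * t) < degree (P^(n+1))"
  proof (cases "t = 0")
    case True
    thus ?thesis using ds dP dpos by auto
  next
    case False
    have "degree (P^n * t) = n * degree P + degree t" using False P0 dPn by (simp add: degree_mult_eq)
    hence "degree (P^n * t) < (n+1) * degree P" using dt False by simp
    moreover have "degree s < (n+1) * degree P" using ds dpos by auto
    ultimately have "degree (s + P^n * t) < (n+1) * degree P" by (intro degree_add_less)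
    thus ?thesis using dP by simp
  qed
qed

lemma memA_lift:
  assumes s: "s \<in> Res (P^n)" and t: "t \<in> Res P"
  shows "s + P^n * t \<in> A_qh hs (P^(n+1)) \<longleftrightarrow> (\<forall>i<length hs. rep (P^(n+1)) (s + P^n * t + hs!i))"
  using lift_Res[OF s t] A_qh_mem Res_iff by blast

lemma reduce:
  assumes "rep (P^(n+1)) (s + P^n * t + h)"
  shows "rep (P^n) (s + h)"
proof -
  have "P^n dvd P^(n+1)" by (simp add: le_imp_power_dvd)
  hence "rep (P^n) (s + P^n * t + h)" using assms rep_mono by blast
  moreover have "P^n dvd (s + P^n * t + h) - (s + h)" by simp
  ultimately show ?thesis using rep_cong by blast
qed

lemma F0:
  assumes s: "s \<in> Res (P^n)" and ns: "s \<notin> A_qh hs (P^n)"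
  shows "{t \<in> Res P. s + P^n * t \<in> A_qh hs (P^(n+1))} = {}"
proof (rule ccontr)
  assume "{t \<in> Res P. s + P^n * t \<in> A_qh hs (P^(n+1))} \<noteq> {}"
  then obtain t where t: "t \<in> Res P" "s + P^n * t \<in> A_qh hs (P^(n+1))" by auto
  hence "\<forall>i<length hs. rep (P^(n+1)) (s + P^n * t + hs!i)" using memA_lift[OF s] by blast
  hence "\<forall>i<length hs. rep (P^n) (s + hs!i)" using reduce by blast
  hence "s \<in> A_qh hs (P^n)" using A_qh_mem s Res_iff by blast
  thus False using ns by simp
qed

lemma F0':
  assumes s: "s \<in> Res (P^n)" and ns: "s \<notin> A_qh hs (P^n)"
  shows "{t \<in> Res P. s + P^n * t \<in> Omega_qh hs (P^(n+1))} = {}"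
  using F0[OF s ns] Om_iff by blast

lemma K':
  assumes n: "n \<ge> nu" and r: "rep (P^n) g" and nd: "\<not> P^n dvd g"
  shows "rep (P^(n+1)) (g + P^n * t)"
  using K_lemma[OF P two PT] n nu1 r nd by auto

lemma Fs:
  assumes n: "n \<ge> nu" and s: "s \<in> Omega_star_qh hs (P^n)"
  shows "{t \<in> Res P. s + P^n * t \<in> A_qh hs (P^(n+1))} = Res P"
proof -
  have sA: "s \<in> A_qh hs (P^n)" and nd: "\<forall>i<length hs. \<not> P^n dvd s + hs!i" using s Os_iff by auto
  have sR: "s \<in> Res (P^n)" using sA A_qh_Res by blast
  have r: "\<forall>i<length hs. rep (P^n) (s + hs!i)" using sA A_qh_mem by blast
  have "s + P^n * t \<in> A_qh hs (P^(n+1))" if t: "t \<in> Res P" for t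
  proof -
    have "\<forall>i<length hs. rep (P^(n+1)) (s + P^n * t + hs!i)"
    proof (intro allI impI)
      fix i assume i: "i < length hs"
      have "rep (P^(n+1)) ((s + hs!i) + P^n * t)" using K'[OF n] r nd i by blast
      thus "rep (P^(n+1)) (s + P^n * t + hs!i)" by (simp add: add_ac)
    qed
    thus ?thesis using memA_lift[OF sR t] by blast
  qed
  thus ?thesis by auto
qed

lemma Fs':
  assumes n: "n \<ge> nu" and s: "s \<in> Omega_star_qh hs (P^n)"
  shows "{t \<in> Res P. s + P^n * t \<in> Omega_qh hs (P^(n+1))} = {}"
proof (rule ccontr)
  assume "{t \<in> Res P. s + P^n * t \<in> Omega_qh hs (P^(n+1))} \<noteq> {}"
  then obtain t i where i: "i < length hs" and d: "P^(n+1) dvd s + P^n * t + hs!i"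
    using Om_iff by blast
  have "P^n dvd P^(n+1)" by (simp add: le_imp_power_dvd)
  hence "P^n dvd s + P^n * t + hs!i" using d dvd_trans by blast
  moreover have "s + hs!i = (s + P^n * t + hs!i) - P^n * t" by simp
  ultimately have "P^n dvd s + hs!i" by (metis dvd_diff dvd_triv_left)
  thus False using s Os_iff i by blast
qed

lemma rep_Pn_mod: "rep (P^(n+1)) (P^n * x) \<longleftrightarrow> rep (P^(n+1)) (P^n * (x mod P))"
proof -
  have "P^n * x - P^n * (x mod P) = P^(n+1) * (x div P)"
  proof -
    have "x - x mod P = P * (x div P)" by (simp add: minus_mod_eq_mult_div)
    hence "P^n * x - P^n * (x mod P) = P^n * (P * (x div P))" by (simp add: right_diff_distrib[symmetric])
    thus ?thesis by (simp add: mult.assoc)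
  qed
  hence d: "P^(n+1) dvd P^n * x - P^n * (x mod P)" by simp
  hence d': "P^(n+1) dvd P^n * (x mod P) - P^n * x" by (metis dvd_minus_iff minus_diff_eq)
  show ?thesis using rep_cong[OF d] rep_cong[OF d'] by blast
qed

lemma Fo:
  assumes n: "n \<ge> nu" and s: "s \<in> Omega_qh hs (P^n)" and i0: "i0 < length hs"
    and u: "s + hs!i0 = P^n * u"
  shows "{t \<in> Res P. s + P^n * t \<in> A_qh hs (P^(n+1))} = {t \<in> Res P. rep (P^(n+1)) (P^n * ((u + t) mod P))}"
    and "{t \<in> Res P. s + P^n * t \<in> Omega_qh hs (P^(n+1))} = {t \<in> Res P. (u + t) mod P = 0}"
proof -
  have sA: "s \<in> A_qh hs (P^n)" using s Om_iff by blast
  have sR: "s \<in> Res (P^n)" using sA A_qh_Res by blast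
  have r: "\<forall>i<length hs. rep (P^n) (s + hs!i)" using sA A_qh_mem by blast
  have di0: "P^n dvd s + hs!i0" using u by simp
  have ndj: "\<not> P^n dvd s + hs!j" if j: "j < length hs" "j \<noteq> i0" for j
  proof
    assume "P^n dvd s + hs!j"
    hence "j = i0" by (rule uniq[OF n j(1) i0 _ di0])
    thus False using j(2) by simp
  qed
  have other: "rep (P^(n+1)) (s + P^n * t + hs!j)" if j: "j < length hs" "j \<noteq> i0" for j t
  proof -
    have "rep (P^n) (s + hs!j)" using r j(1) by blast
    hence "rep (P^(n+1)) ((s + hs!j) + P^n * t)" using K'[OF n] ndj[OF j] by blast
    moreover have "(s + hs!j) + P^n * t = s + P^n * t + hs!j" by (simp add: add_ac)
    ultimately show ?thesis by simp
  qed
  have eq0: "s + P^n * t + hs!i0 = P^n * (u + t)" for t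
  proof -
    have "s + P^n * t + hs!i0 = (s + hs!i0) + P^n * t" by (simp add: add_ac)
    also have "\<dots> = P^n * u + P^n * t" by (simp only: u)
    also have "\<dots> = P^n * (u + t)" by (simp only: distrib_left)
    finally show ?thesis .
  qed
  have memA: "s + P^n * t \<in> A_qh hs (P^(n+1)) \<longleftrightarrow> rep (P^(n+1)) (P^n * ((u + t) mod P))"
    if t: "t \<in> Res P" for t
  proof -
    have "(\<forall>i<length hs. rep (P^(n+1)) (s + P^n * t + hs!i)) \<longleftrightarrow> rep (P^(n+1)) (s + P^n * t + hs!i0)"
    proof
      assume "\<forall>i<length hs. rep (P^(n+1)) (s + P^n * t + hs!i)"
      thus "rep (P^(n+1)) (s + P^n * t + hs!i0)" using i0 by blast
    next
      assume r0: "rep (P^(n+1)) (s + P^n * t + hs!i0)"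
      show "\<forall>i<length hs. rep (P^(n+1)) (s + P^n * t + hs!i)"
      proof (intro allI impI)
        fix i assume i: "i < length hs"
        show "rep (P^(n+1)) (s + P^n * t + hs!i)"
        proof (cases "i = i0")
          case True thus ?thesis using r0 by simp
        next
          case False thus ?thesis using other[OF i False] by blast
        qed
      qed
    qed
    hence "s + P^n * t \<in> A_qh hs (P^(n+1)) \<longleftrightarrow> rep (P^(n+1)) (s + P^n * t + hs!i0)"
      using memA_lift[OF sR t] by blast
    also have "\<dots> \<longleftrightarrow> rep (P^(n+1)) (P^n * (u + t))" by (simp only: eq0)
    also have "\<dots> \<longleftrightarrow> rep (P^(n+1)) (P^n * ((u + t) mod P))" by (rule rep_Pn_mod)
    finally show ?thesis .
  qed
  show "{t \<in> Res P. s + P^n * t \<in> A_qh hs (P^(n+1))} = {t \<in> Res P. rep (P^(n+1)) (P^n * ((u + t) mod P))}"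
  proof (rule Collect_cong)
    fix t show "(t \<in> Res P \<and> s + P^n * t \<in> A_qh hs (P^(n+1))) \<longleftrightarrow> (t \<in> Res P \<and> rep (P^(n+1)) (P^n * ((u + t) mod P)))"
      using memA[of t] by (cases "t \<in> Res P") simp_all
  qed
  have pe: "P^(n+1) = P^n * P" by (simp only: Suc_eq_plus1[symmetric] power_Suc2)
  have Pn0: "P^n \<noteq> 0" using P0 by simp
  have pdiv: "P^(n+1) dvd P^n * (u + t) \<longleftrightarrow> (u + t) mod P = 0" for t
  proof -
    have "P^(n+1) dvd P^n * (u + t) \<longleftrightarrow> P dvd u + t" unfolding pe by (rule dvd_times_left_cancel_iff[OF Pn0])
    thus ?thesis by (simp only: dvd_eq_mod_eq_0)
  qed
  have memO: "s + P^n * t \<in> Omega_qh hs (P^(n+1)) \<longleftrightarrow> (u + t) mod P = 0"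
    if t: "t \<in> Res P" for t
  proof
    assume h: "s + P^n * t \<in> Omega_qh hs (P^(n+1))"
    then obtain j where j: "j < length hs" "P^(n+1) dvd s + P^n * t + hs!j" using Om_iff by blast
    have "j = i0"
    proof (rule ccontr)
      assume ji: "j \<noteq> i0"
      have "P^n dvd P^(n+1)" by (simp add: le_imp_power_dvd)
      hence "P^n dvd s + P^n * t + hs!j" using j(2) dvd_trans by blast
      moreover have "P^n dvd P^n * t" by simp
      ultimately have dd: "P^n dvd (s + P^n * t + hs!j) - P^n * t" by (rule dvd_diff)
      have eqn: "(s + P^n * t + hs!j) - P^n * t = s + hs!j" by simp
      from dd have "P^n dvd s + hs!j" by (simp only: eqn)
      thus False using ndj[OF j(1) ji] by simp
    qed
    hence "P^(n+1) dvd s + P^n * t + hs!i0" using j(2) by simp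
    hence "P^(n+1) dvd P^n * (u + t)" by (simp only: eq0)
    thus "(u + t) mod P = 0" using pdiv by blast
  next
    assume h: "(u + t) mod P = 0"
    have "P^(n+1) dvd P^n * (u + t)" by (rule iffD2[OF pdiv h])
    hence d: "P^(n+1) dvd s + P^n * t + hs!i0" by (simp only: eq0)
    have "rep (P^(n+1)) (P^n * ((u + t) mod P))" unfolding h by (rule rep_0) simp
    hence A: "s + P^n * t \<in> A_qh hs (P^(n+1))" by (rule iffD2[OF memA[OF t]])
    show "s + P^n * t \<in> Omega_qh hs (P^(n+1))" unfolding Om_iff using A i0 d by blast
  qed
  show "{t \<in> Res P. s + P^n * t \<in> Omega_qh hs (P^(n+1))} = {t \<in> Res P. (u + t) mod P = 0}"
  proof (rule Collect_cong)
    fix t show "(t \<in> Res P \<and> s + P^n * t \<in> Omega_qh hs (P^(n+1))) \<longleftrightarrow> (t \<in> Res P \<and> (u + t) mod P = 0)"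
      using memO[of t] by (cases "t \<in> Res P") simp_all
  qed
qed

lemma recur:
  assumes n: "n \<ge> nu"
  shows "card (A_qh hs (P^(n+1))) = card (Res P) * card (Omega_star_qh hs (P^n)) + Ecount P n * card (Omega_qh hs (P^n))"
    and "card (Omega_qh hs (P^(n+1))) = card (Omega_qh hs (P^n))"
proof -
  have Pn0: "P^n \<noteq> 0" using P0 by simp
  have fR: "finite (Res (P^n))" using finite_Res[OF Pn0] .
  have zero1: "card {t \<in> Res P. (u + t) mod P = 0} = 1" for u
  proof -
    have "card {t \<in> Res P. (u + t) mod P = 0} = card {t \<in> Res P. t = 0}" by (rule card_shift[where Q="\<lambda>x. x = 0"])
    also have "{t \<in> Res P. t = 0} = {0}"
    proof
      show "{t \<in> Res P. t = 0} \<subseteq> {0}" by blast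
      have "(0::'a poly) \<in> Res P" unfolding Res_iff by simp
      thus "{0} \<subseteq> {t \<in> Res P. t = 0}" by blast
    qed
    finally show ?thesis by simp
  qed
  have "card (A_qh hs (P^(n+1))) = (\<Sum>s\<in>Res (P^n). card {t \<in> Res P. s + P^n * t \<in> A_qh hs (P^(n+1))})"
    by (rule fiber_count[OF P0 A_qh_Res])
  also have "\<dots> = card (Res P) * card (Omega_star_qh hs (P^n)) + Ecount P n * card (Omega_qh hs (P^n))"
  proof (rule sum_split[OF fR A_qh_Res A_split])
    show "\<forall>s\<in>Res (P^n) - A_qh hs (P^n). card {t \<in> Res P. s + P^n * t \<in> A_qh hs (P^(n+1))} = 0"
    proof
      fix s assume "s \<in> Res (P^n) - A_qh hs (P^n)"
      hence "{t \<in> Res P. s + P^n * t \<in> A_qh hs (P^(n+1))} = {}" using F0 by blast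
      thus "card {t \<in> Res P. s + P^n * t \<in> A_qh hs (P^(n+1))} = 0" by (simp only: card.empty)
    qed
    show "\<forall>s\<in>Omega_star_qh hs (P^n). card {t \<in> Res P. s + P^n * t \<in> A_qh hs (P^(n+1))} = card (Res P)"
    proof
      fix s assume "s \<in> Omega_star_qh hs (P^n)"
      hence "{t \<in> Res P. s + P^n * t \<in> A_qh hs (P^(n+1))} = Res P" using Fs[OF n] by blast
      thus "card {t \<in> Res P. s + P^n * t \<in> A_qh hs (P^(n+1))} = card (Res P)" by (simp only:)
    qed
    show "\<forall>s\<in>Omega_qh hs (P^n). card {t \<in> Res P. s + P^n * t \<in> A_qh hs (P^(n+1))} = Ecount P n"
    proof
      fix s assume s: "s \<in> Omega_qh hs (P^n)"
      hence "\<exists>i<length hs. P^n dvd s + hs!i" unfolding Om_iff by (rule conjunct2)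
      then obtain i0 where i0: "i0 < length hs" "P^n dvd s + hs!i0" by blast
      from i0(2) obtain u where u: "s + hs!i0 = P^n * u" by (rule dvdE)
      note iu = i0(1) u
      have "card {t \<in> Res P. s + P^n * t \<in> A_qh hs (P^(n+1))} = card {t \<in> Res P. rep (P^(n+1)) (P^n * ((u + t) mod P))}"
        using Fo(1)[OF n s iu] by simp
      also have "\<dots> = Ecount P n" unfolding Ecount_def
        by (rule card_shift[where Q="\<lambda>x. rep (P^(n+1)) (P^n * x)"])
      finally show "card {t \<in> Res P. s + P^n * t \<in> A_qh hs (P^(n+1))} = Ecount P n" .
    qed
  qed
  finally show "card (A_qh hs (P^(n+1))) = card (Res P) * card (Omega_star_qh hs (P^n)) + Ecount P n * card (Omega_qh hs (P^n))" .
  have OR: "Omega_qh hs (P^(n+1)) \<subseteq> Res (P^(n+1))" using A_qh_Res Om_iff by blast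
  have "card (Omega_qh hs (P^(n+1))) = (\<Sum>s\<in>Res (P^n). card {t \<in> Res P. s + P^n * t \<in> Omega_qh hs (P^(n+1))})"
    by (rule fiber_count[OF P0 OR])
  also have "\<dots> = 0 * card (Omega_star_qh hs (P^n)) + 1 * card (Omega_qh hs (P^n))"
  proof (rule sum_split[OF fR A_qh_Res A_split])
    show "\<forall>s\<in>Res (P^n) - A_qh hs (P^n). card {t \<in> Res P. s + P^n * t \<in> Omega_qh hs (P^(n+1))} = 0"
    proof
      fix s assume "s \<in> Res (P^n) - A_qh hs (P^n)"
      hence "{t \<in> Res P. s + P^n * t \<in> Omega_qh hs (P^(n+1))} = {}" using F0' by blast
      thus "card {t \<in> Res P. s + P^n * t \<in> Omega_qh hs (P^(n+1))} = 0" by (simp only: card.empty)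
    qed
    show "\<forall>s\<in>Omega_star_qh hs (P^n). card {t \<in> Res P. s + P^n * t \<in> Omega_qh hs (P^(n+1))} = 0"
    proof
      fix s assume "s \<in> Omega_star_qh hs (P^n)"
      hence "{t \<in> Res P. s + P^n * t \<in> Omega_qh hs (P^(n+1))} = {}" using Fs'[OF n] by blast
      thus "card {t \<in> Res P. s + P^n * t \<in> Omega_qh hs (P^(n+1))} = 0" by (simp only: card.empty)
    qed
    show "\<forall>s\<in>Omega_qh hs (P^n). card {t \<in> Res P. s + P^n * t \<in> Omega_qh hs (P^(n+1))} = 1"
    proof
      fix s assume s: "s \<in> Omega_qh hs (P^n)"
      hence "\<exists>i<length hs. P^n dvd s + hs!i" unfolding Om_iff by (rule conjunct2)
      then obtain i0 where i0: "i0 < length hs" "P^n dvd s + hs!i0" by blast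
      from i0(2) obtain u where u: "s + hs!i0 = P^n * u" by (rule dvdE)
      note iu = i0(1) u
      show "card {t \<in> Res P. s + P^n * t \<in> Omega_qh hs (P^(n+1))} = 1"
        using Fo(2)[OF n s iu] zero1 by simp
    qed
  qed
  finally show "card (Omega_qh hs (P^(n+1))) = card (Omega_qh hs (P^n))" by simp
qed

end


lemma assoc_const:
  fixes a b :: "'a::field poly"
  assumes "a dvd b" "b dvd a" "a \<noteq> 0"
  shows "\<exists>c. c \<noteq> 0 \<and> b = smult c a"
proof -
  obtain k where k: "b = a * k" using assms(1) by (auto elim: dvdE)
  obtain l where l: "a = b * l" using assms(2) by (auto elim: dvdE)
  have "a * (k * l) = a * 1" using k l by (metis mult.assoc mult.right_neutral)
  hence "k * l = 1" using mult_left_cancel[OF assms(3)] by blast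
  hence "k dvd 1" by (metis dvdI mult.commute)
  then obtain c where c: "k = [:c:]" "c dvd 1" using is_unit_poly_iff by blast
  have "c \<noteq> 0" using c(2) by auto
  thus ?thesis using k c(1) by (intro exI[of _ c]) simp
qed

lemma dvd_gcd_mult:
  fixes Q f g :: "'a::field_gcd poly"
  assumes "Q dvd f * g" shows "Q dvd gcd Q f * g"
proof -
  have "Q dvd g * f" using assms by (simp add: mult.commute)
  moreover have "Q dvd g * Q" by simp
  ultimately have "Q dvd gcd (g * f) (g * Q)" by (rule gcd_greatest)
  also have "gcd (g * f) (g * Q) = normalize g * gcd f Q" by (rule gcd_mult_distrib'[symmetric])
  also have "normalize g * gcd f Q dvd g * gcd Q f" by (simp add: gcd.commute mult_dvd_mono)
  finally show ?thesis by (simp add: mult.commute)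
qed

definition rho :: "'a::comm_ring_1 poly \<Rightarrow> 'a poly" where
  "rho f = pcompose f [:0,-1:]"

lemma rho_mult: "rho (f * g) = rho f * rho g" unfolding rho_def by (rule pcompose_mult)
lemma rho_add: "rho (f + g) = rho f + rho g" unfolding rho_def by (rule pcompose_add)
lemma rho_diff: "rho (f - g) = rho f - rho g" unfolding rho_def by (rule pcompose_diff)
lemma rho_rho: "rho (rho f) = f"
proof -
  have "rho (rho f) = pcompose f (pcompose [:0,-1:] [:0,-1:])" unfolding rho_def by (simp add: pcompose_assoc)
  also have "pcompose [:0,-1:] [:0,-1:] = ([:0,1:] :: 'a poly)" by (simp add: pcompose_pCons)
  also have "pcompose f [:0,1:] = f" by (rule pcompose_idR)
  finally show ?thesis .
qed
lemma rho_dvd: "a dvd b \<Longrightarrow> rho a dvd rho b" by (auto elim!: dvdE simp: rho_mult)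

lemma rho_comp_s2: "rho (pcompose f [:0,0,-1:]) = pcompose f [:0,0,-1:]"
proof -
  have "rho (pcompose f [:0,0,-1:]) = pcompose f (pcompose [:0,0,-1:] [:0,-1:])" unfolding rho_def by (simp add: pcompose_assoc)
  also have "pcompose [:0,0,-1:] [:0,-1:] = ([:0,0,-1:] :: 'a poly)" by (simp add: pcompose_pCons)
  finally show ?thesis .
qed

lemma recip:
  fixes P :: "'a::field_gcd poly"
  assumes monic: "lead_coeff P = 1" and two: "(2::'a) \<noteq> 0"
    and c0: "coeff P 0 \<noteq> 0" and d: "P dvd x^2 + [:0,1:]"
  shows "\<exists>c. coeff P 0 = c^2"
proof -
  define S :: "'a poly" where "S = [:0,1:]"
  define s2 :: "'a poly" where "s2 = [:0,0,-1:]"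
  define Q where "Q = pcompose P s2"
  define X where "X = pcompose x s2"
  have P0: "P \<noteq> 0" using monic by auto
  have cQ0: "coeff Q 0 = coeff P 0" unfolding Q_def s2_def
    by (simp add: poly_0_coeff_0[symmetric] poly_pcompose)
  have Q0: "Q \<noteq> 0" using cQ0 c0 by auto
  obtain k where k: "x^2 + S = P * k" using d unfolding S_def by (auto elim: dvdE)
  have h1: "pcompose (x^2 + S) s2 = Q * pcompose k s2" unfolding k Q_def by (rule pcompose_mult)
  have h2: "pcompose (x^2 + S) s2 = X^2 - S^2"
    unfolding X_def S_def s2_def by (simp add: pcompose_add pcompose_mult pcompose_pCons power2_eq_square)
  have h3: "(X - S) * (X + S) = X^2 - S^2" by algebra
  have "(X - S) * (X + S) = Q * pcompose k s2" unfolding h3 h2[symmetric] h1 ..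
  hence QXS: "Q dvd (X - S) * (X + S)" by simp
  have rQ: "rho Q = Q" unfolding Q_def s2_def by (rule rho_comp_s2)
  have rX: "rho X = X" unfolding X_def s2_def by (rule rho_comp_s2)
  have rS: "rho S = - S" unfolding rho_def S_def by (simp add: pcompose_pCons)
  define A where "A = gcd Q (X - S)"
  define B where "B = gcd Q (X + S)"
  have rXS: "rho (X - S) = X + S" by (simp add: rho_diff rX rS)
  have rXS': "rho (X + S) = X - S" by (simp add: rho_add rX rS)
  have rAB: "rho A dvd B"
  proof -
    have "rho A dvd rho Q" unfolding A_def by (intro rho_dvd) simp
    moreover have "rho A dvd rho (X - S)" unfolding A_def by (intro rho_dvd) simp
    ultimately show ?thesis unfolding B_def rQ rXS by (rule gcd_greatest)
  qed
  have rBA: "rho B dvd A"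
  proof -
    have "rho B dvd rho Q" unfolding B_def by (intro rho_dvd) simp
    moreover have "rho B dvd rho (X + S)" unfolding B_def by (intro rho_dvd) simp
    ultimately show ?thesis unfolding A_def rQ rXS' by (rule gcd_greatest)
  qed
  hence BrA: "B dvd rho A" using rho_dvd rho_rho by metis
  have A0: "A \<noteq> 0" unfolding A_def using Q0 by simp
  have B0: "B \<noteq> 0" unfolding B_def using Q0 by simp
  have SQ: "\<not> S dvd Q" unfolding S_def using T_dvd_iff cQ0 c0 by metis
  have Sprime: "prime_elem S"
  proof -
    have "irreducible S" unfolding S_def by (rule irreducible_linear_field_poly) simp
    thus ?thesis by (rule irreducible_imp_prime_elem)
  qed
  have copSQ: "coprime S Q" using Sprime SQ prime_elem_imp_coprime by blast
  have copAB: "coprime A B"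
  proof (rule coprimeI)
    fix D assume DA: "D dvd A" and DB: "D dvd B"
    have DQ: "D dvd Q" using DA unfolding A_def using dvd_trans gcd_dvd1 by blast
    have D1: "D dvd X - S" using DA unfolding A_def using dvd_trans gcd_dvd2 by blast
    have D2: "D dvd X + S" using DB unfolding B_def using dvd_trans gcd_dvd2 by blast
    have "D dvd (X + S) - (X - S)" using D1 D2 by (rule dvd_diff[rotated])
    moreover have "(X + S) - (X - S) = S + S" by algebra
    ultimately have "D dvd S + S" by simp
    hence "D dvd smult (inverse 2) (S + S)" by (rule dvd_smult)
    moreover have "smult (inverse 2) (S + S) = smult (inverse 2 + inverse 2) S" by (simp only: smult_add_right smult_add_left)
    moreover have "inverse 2 + inverse (2::'a) = 1" using two by (metis mult_2 right_inverse)
    ultimately have "D dvd S" by simp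
    thus "is_unit D" using DQ copSQ coprime_common_divisor by blast
  qed
  have ABQ: "A * B dvd Q" using copAB unfolding A_def B_def by (intro divides_mult) auto
  have QAB: "Q dvd A * B"
  proof -
    have "Q dvd A * (X + S)" unfolding A_def using QXS by (rule dvd_gcd_mult)
    hence "Q dvd (X + S) * A" by (simp add: mult.commute)
    hence "Q dvd B * A" unfolding B_def by (rule dvd_gcd_mult)
    thus ?thesis by (simp add: mult.commute)
  qed
  obtain c1 where c1: "c1 \<noteq> 0" "Q = smult c1 (A * B)"
    using assoc_const[OF ABQ QAB] A0 B0 by auto
  have rA0: "rho A \<noteq> 0"
  proof
    assume "rho A = 0"
    have "A = rho (rho A)" by (simp only: rho_rho)
    also have "\<dots> = rho 0" using \<open>rho A = 0\<close> by simp
    also have "\<dots> = 0" by (simp add: rho_def)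
    finally have "A = 0" .
    thus False using A0 by simp
  qed
  obtain c2 where c2: "c2 \<noteq> 0" "B = smult c2 (rho A)"
    using assoc_const[OF rAB BrA rA0] by auto
  have degrA: "degree (rho A) = degree A" unfolding rho_def by (simp add: degree_pcompose)
  have lcrA: "lead_coeff (rho A) = lead_coeff A * (-1) ^ degree A"
    unfolding rho_def by (simp add: lead_coeff_comp)
  have c0rA: "coeff (rho A) 0 = coeff A 0"
    unfolding rho_def by (simp add: poly_0_coeff_0[symmetric] poly_pcompose)
  have QA: "Q = smult (c1 * c2) (A * rho A)" using c1 c2 by (simp add: mult_smult_right)
  have dQ: "degree Q = 2 * degree P" unfolding Q_def s2_def by (simp add: degree_pcompose)
  have dQ': "degree Q = degree A + degree A"
    using QA c1 c2 A0 rA0 degrA by (simp add: degree_mult_eq)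
  hence dA: "degree A = degree P" using dQ by simp
  have lQ: "lead_coeff Q = (-1) ^ degree P" unfolding Q_def s2_def using monic by (simp add: lead_coeff_comp)
  have lQ': "lead_coeff Q = c1 * c2 * (lead_coeff A * (lead_coeff A * (-1) ^ degree A))"
    unfolding QA by (simp add: lead_coeff_mult lcrA)
  have LA: "lead_coeff A \<noteq> 0" using A0 by simp
  have key: "c1 * c2 * (lead_coeff A)^2 = 1"
  proof -
    have "(-1::'a) ^ degree P = c1 * c2 * (lead_coeff A)^2 * (-1) ^ degree P"
      using lQ lQ' dA by (simp add: power2_eq_square algebra_simps)
    moreover have "(-1::'a) ^ degree P \<noteq> 0" by simp
    ultimately show ?thesis by (metis mult_cancel_right1)
  qed
  have "coeff P 0 = c1 * c2 * (coeff A 0)^2"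
    using cQ0 unfolding QA by (simp add: coeff_mult_0 c0rA power2_eq_square)
  also have "\<dots> = (coeff A 0 / lead_coeff A)^2"
    using key LA by (simp add: power_divide field_simps)
  finally show ?thesis by blast
qed


lemma closed_form:
  fixes N alpha E :: "nat \<Rightarrow> real" and p Z :: real
  assumes rec: "\<And>n. n \<ge> nu \<Longrightarrow> N (Suc n) = p * (N n - Z) + E n * Z"
    and arec: "\<And>n. alpha (Suc n) = p * alpha n - p + E n"
  shows "n \<ge> nu \<Longrightarrow> N n = p^(n-nu) * (N nu - alpha nu * Z) + alpha n * Z"
proof (induction n)
  case 0 thus ?case by simp
next
  case (Suc n)
  show ?case
  proof (cases "nu = Suc n")
    case True thus ?thesis by simp
  next
    case False
    hence le: "nu \<le> n" using Suc.prems by simp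
    have IH: "N n = p^(n-nu) * (N nu - alpha nu * Z) + alpha n * Z" using Suc.IH le by simp
    have pe: "p^(Suc n - nu) = p * p^(n-nu)" using le by (simp add: Suc_diff_le)
    have "N (Suc n) = p * (N n - Z) + E n * Z" using rec le by simp
    also have "\<dots> = p * (p^(n-nu) * (N nu - alpha nu * Z)) + (p * alpha n - p + E n) * Z"
      unfolding IH by (simp add: algebra_simps)
    also have "\<dots> = p^(Suc n - nu) * (N nu - alpha nu * Z) + alpha (Suc n) * Z"
      unfolding pe arec by (simp add: algebra_simps)
    finally show ?thesis .
  qed
qed

lemma lim_form:
  fixes N alpha :: "nat \<Rightarrow> real" and p C Z :: real
  assumes p: "p > 1" and eq: "\<And>n. n \<ge> nu \<Longrightarrow> N n = p^(n-nu) * C + alpha n * Z"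
    and bd: "\<And>n. \<bar>alpha n\<bar> \<le> 1"
  shows "(\<lambda>n. N n / p^n) \<longlonglongrightarrow> C / p^nu"
proof -
  define g where "g n = C / p^nu + alpha n * Z * (inverse p)^n" for n
  have "inverse p < 1" using p by (simp add: inverse_less_1_iff)
  moreover have "0 < inverse p" using p by simp
  ultimately have ip: "norm (inverse p) < 1" by simp
  have z: "(\<lambda>n. \<bar>Z\<bar> * (inverse p)^n) \<longlonglongrightarrow> 0"
    using tendsto_mult[OF tendsto_const LIMSEQ_power_zero[OF ip], of "\<bar>Z\<bar>"] by simp
  have "(\<lambda>n. alpha n * Z * (inverse p)^n) \<longlonglongrightarrow> 0"
  proof (rule Lim_null_comparison[OF _ z])
    show "\<forall>\<^sub>F n in sequentially. norm (alpha n * Z * inverse p ^ n) \<le> \<bar>Z\<bar> * inverse p ^ n"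
    proof (rule always_eventually, rule allI)
      fix n
      have ipn: "0 \<le> inverse p ^ n" using p by simp
      have "norm (alpha n * Z * inverse p ^ n) = \<bar>alpha n\<bar> * (\<bar>Z\<bar> * inverse p ^ n)"
        using ipn by (simp add: abs_mult)
      also have "\<dots> \<le> 1 * (\<bar>Z\<bar> * inverse p ^ n)" using bd[of n] ipn by (intro mult_right_mono) auto
      finally show "norm (alpha n * Z * inverse p ^ n) \<le> \<bar>Z\<bar> * inverse p ^ n" by simp
    qed
  qed
  hence g: "g \<longlonglongrightarrow> C / p^nu + 0" unfolding g_def by (intro tendsto_add tendsto_const)
  have ev: "\<forall>\<^sub>F n in sequentially. g n = N n / p^n"
  proof (rule eventually_sequentiallyI[of nu])
    fix n assume n: "nu \<le> n"
    have pn: "p^n = p^(n-nu) * p^nu" using n by (simp add: power_add[symmetric])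
    have p0: "p^(n-nu) \<noteq> 0" "p^nu \<noteq> 0" using p by auto
    have e1: "N n / p^n = p^(n-nu) * C / p^n + alpha n * Z / p^n" using eq[OF n] by (simp add: add_divide_distrib)
    have pnz: "p \<noteq> 0" using p by simp
    have e2: "p^(n-nu) * C / p^n = C / p^nu" unfolding pn using p0 pnz by simp
    have e3: "alpha n * Z / p^n = alpha n * Z * (inverse p)^n" by (simp add: power_inverse divide_inverse)
    show "g n = N n / p^n" unfolding g_def e1 e2 e3 ..
  qed
  show ?thesis using Lim_transform_eventually[OF g ev] by simp
qed

lemma PT_lemma:
  fixes P :: "'a::field_gcd poly"
  assumes monic: "lead_coeff P = 1" and irr: "irreducible P"
  shows "P = [:0,1:] \<or> \<not> P dvd [:0,1:]"
proof (cases "P dvd [:0,1:]")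
  case False thus ?thesis by simp
next
  case True
  then obtain Q where Q: "[:0,1:] = P * Q" by (rule dvdE)
  have "irreducible ([:0,1:] :: 'a poly)" by (rule irreducible_linear_field_poly) simp
  hence "is_unit P \<or> is_unit Q" using Q irreducibleD by blast
  moreover have "\<not> is_unit P" using irr by (simp add: irreducible_def)
  ultimately have "is_unit Q" by blast
  then obtain c where c: "Q = [:c:]" using is_unit_poly_iff by blast
  have "lead_coeff ([:0,1:] :: 'a poly) = lead_coeff P * lead_coeff Q" unfolding Q by (rule lead_coeff_mult)
  hence "c = 1" using monic c by simp
  thus ?thesis using Q c by simp
qed

lemma T_lemma:
  fixes P :: "'a::field_gcd poly"
  assumes monic: "lead_coeff P = 1" and irr: "irreducible P" and c0: "coeff P 0 = 0"
  shows "P = [:0,1:]"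
proof -
  have "[:0,1:] dvd P" using c0 T_dvd_iff by blast
  then obtain Q where Q: "P = [:0,1:] * Q" by (auto elim: dvdE)
  have "\<not> is_unit ([:0,1:] :: 'a poly)" by (simp add: is_unit_poly_iff)
  hence "is_unit Q" using irr Q irreducibleD by blast
  then obtain c where c: "Q = [:c:]" using is_unit_poly_iff by blast
  have "lead_coeff P = lead_coeff ([:0,1:] :: 'a poly) * lead_coeff Q" unfolding Q by (rule lead_coeff_mult)
  hence "c = 1" using monic c by simp
  thus ?thesis using Q c by simp
qed

lemma ndh_lemma:
  fixes P :: "'a::{finite,field_gcd} poly"
  assumes irr: "irreducible P" and dist: "distinct hs" and nu: "nu > nu_h hs P"
    and i: "i < length hs" and j: "j < length hs" and ij: "i \<noteq> j"
  shows "\<not> P^nu dvd hs!i - hs!j"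
proof
  assume d: "P^nu dvd hs!i - hs!j"
  have x0: "hs!i - hs!j \<noteq> 0" using dist i j ij by (simp add: nth_eq_iff_index_eq)
  have nu_unit: "\<not> is_unit P" using irr by (simp add: irreducible_def)
  have "nu \<le> multiplicity P (hs!i - hs!j)" by (rule multiplicity_geI[OF x0 nu_unit d])
  moreover have "multiplicity P (hs!i - hs!j) \<le> nu_h hs P"
  proof -
    let ?S = "{multiplicity P (hs ! i - hs ! j) | i j. i < length hs \<and> j < length hs \<and> i \<noteq> j} \<union> {0}"
    have fin: "finite ?S"
    proof -
      have "{multiplicity P (hs ! i - hs ! j) | i j. i < length hs \<and> j < length hs \<and> i \<noteq> j}
          \<subseteq> (\<lambda>(i,j). multiplicity P (hs ! i - hs ! j)) ` ({..<length hs} \<times> {..<length hs})" by auto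
      moreover have "finite ((\<lambda>(i,j). multiplicity P (hs ! i - hs ! j)) ` ({..<length hs} \<times> {..<length hs}))" by simp
      ultimately have "finite {multiplicity P (hs ! i - hs ! j) | i j. i < length hs \<and> j < length hs \<and> i \<noteq> j}"
        by (rule finite_subset)
      thus ?thesis by simp
    qed
    have "multiplicity P (hs!i - hs!j) \<in> ?S" using i j ij by blast
    thus ?thesis unfolding nu_h_def using fin by (rule Max_ge[rotated])
  qed
  ultimately show False using nu by simp
qed


context setting
begin

lemma N_step_le: "card (A_qh hs (P^(n+1))) \<le> card (Res P) * card (A_qh hs (P^n))"
proof -
  have Pn0: "P^n \<noteq> 0" using P0 by simp
  have fR: "finite (Res (P^n))" using finite_Res[OF Pn0] .
  have fR1: "finite (Res P)" using finite_Res[OF P0] .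
  let ?F = "\<lambda>s. card {t \<in> Res P. s + P^n * t \<in> A_qh hs (P^(n+1))}"
  have "card (A_qh hs (P^(n+1))) = (\<Sum>s\<in>Res (P^n). ?F s)"
    by (rule fiber_count[OF P0 A_qh_Res])
  also have "\<dots> = (\<Sum>s\<in>A_qh hs (P^n). ?F s)"
  proof (rule sum.mono_neutral_right[OF fR A_qh_Res])
    show "\<forall>s\<in>Res (P^n) - A_qh hs (P^n). ?F s = 0"
    proof
      fix s assume "s \<in> Res (P^n) - A_qh hs (P^n)"
      hence "{t \<in> Res P. s + P^n * t \<in> A_qh hs (P^(n+1))} = {}" using F0 by blast
      thus "?F s = 0" by (simp only: card.empty)
    qed
  qed
  also have "\<dots> \<le> (\<Sum>s\<in>A_qh hs (P^n). card (Res P))"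
  proof (rule sum_mono)
    fix s show "?F s \<le> card (Res P)" using fR1 by (intro card_mono) auto
  qed
  also have "\<dots> = card (Res P) * card (A_qh hs (P^n))" by simp
  finally show ?thesis .
qed

lemma conv_general: "convergent (\<lambda>n. real (card (A_qh hs (P^n))) / real (card (Res P)) ^ n)"
proof -
  let ?p = "real (card (Res P))"
  have "finite (Res P)" using finite_Res[OF P0] .
  moreover have "0 \<in> Res P" unfolding Res_iff by simp
  ultimately have pp: "?p > 0" by (auto simp: card_gt_0_iff)
  let ?a = "\<lambda>n. real (card (A_qh hs (P^n))) / ?p ^ n"
  have "decseq ?a"
  proof (rule decseq_SucI)
    fix n
    have "real (card (A_qh hs (P^(Suc n)))) \<le> ?p * real (card (A_qh hs (P^n)))"
      using N_step_le[of n] by (simp only: Suc_eq_plus1 of_nat_mult[symmetric] of_nat_le_iff)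
    hence "real (card (A_qh hs (P^(Suc n)))) / ?p ^ Suc n \<le> ?p * real (card (A_qh hs (P^n))) / ?p ^ Suc n"
      using pp by (intro divide_right_mono) auto
    also have "\<dots> = real (card (A_qh hs (P^n))) / ?p ^ n" using pp by simp
    finally show "?a (Suc n) \<le> ?a n" .
  qed
  moreover have "\<forall>i. 0 \<le> ?a i" by simp
  ultimately obtain L where "?a \<longlonglongrightarrow> L" by (rule decseq_convergent)
  thus ?thesis by (rule convergentI)
qed

end


theorem mainTheorem11:
  fixes P :: "'a::{finite,field_gcd} poly" and hs :: "'a poly list" and \<nu> :: nat
  assumes q_odd: "odd CARD('a)"
    and monic: "lead_coeff P = 1" and irr: "irreducible P"
    and k_pos: "hs \<noteq> []" and dist: "distinct hs"
    and nu: "\<nu> > nu_h hs P"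
  shows "convergent (\<lambda>n. real (card (A_qh hs (P ^ n))) / absP P ^ n)
    \<and> (chi_q P = -1 \<longrightarrow>
         (odd \<nu> \<longrightarrow> delta_qh hs P = absP P powi (- int \<nu>) *
            (real (card (Omega_star_qh hs (P ^ \<nu>)))
             + 1 / (absP P + 1) * real (card (Omega_qh hs (P ^ \<nu>)))))
       \<and> (even \<nu> \<longrightarrow> delta_qh hs P = absP P powi (- int \<nu>) *
            (real (card (Omega_star_qh hs (P ^ \<nu>)))
             + absP P / (absP P + 1) * real (card (Omega_qh hs (P ^ \<nu>))))))
    \<and> (chi_q P = 0 \<longrightarrow>
         delta_qh hs P = absP P powi (- int \<nu>) *
            (real (card (Omega_star_qh hs (P ^ \<nu>)))
             + 1 / 2 * real (card (Omega_qh hs (P ^ \<nu>)))))"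
proof -
  have Pp: "prime_elem P" using irr by (rule irreducible_imp_prime_elem)
  have two: "(2::'a) \<noteq> 0" by (rule two_ne_zero_field[OF q_odd])
  have PT: "P = [:0,1:] \<or> \<not> P dvd [:0,1:]" by (rule PT_lemma[OF monic irr])
  have nu1: "\<nu> \<ge> 1" using nu by simp
  interpret S: setting P hs \<nu>
    by unfold_locales (use Pp two PT nu1 ndh_lemma[OF irr dist nu] in auto)
  have P0: "P \<noteq> 0" by (rule S.P0)
  define p where "p = card (Res P)"
  have pq: "p = CARD('a) ^ degree P" unfolding p_def by (rule card_Res[OF P0])
  have absP: "absP P = real p" unfolding absP_def pq by simp
  have dpos: "degree P > 0"
  proof -
    have "\<not> is_unit P" using Pp by (rule prime_elem_not_unit)
    thus ?thesis using is_unit_iff_degree[OF P0] by auto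
  qed
  have q2: "CARD('a) \<ge> 2"
  proof -
    have "card {0::'a, 1} = 2" by simp
    moreover have "card {0::'a, 1} \<le> CARD('a)" by (rule card_mono) auto
    ultimately show ?thesis by simp
  qed
  have p1: "real p > 1"
  proof -
    have "CARD('a) \<le> CARD('a) ^ degree P" using dpos q2 by (simp add: self_le_power)
    thus ?thesis unfolding pq using q2 by linarith
  qed
  define N where "N n = real (card (A_qh hs (P^n)))" for n
  define Z where "Z = real (card (Omega_qh hs (P^\<nu>)))"
  define W where "W = real (card (Omega_star_qh hs (P^\<nu>)))"
  have seq: "(\<lambda>n. real (card (A_qh hs (P ^ n))) / absP P ^ n) = (\<lambda>n. N n / real p ^ n)"
    unfolding N_def absP by simp
  have conv: "convergent (\<lambda>n. real (card (A_qh hs (P ^ n))) / absP P ^ n)"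
    using S.conv_general unfolding absP p_def by simp
  have fin: "finite (Omega_star_qh hs (P^n))" "finite (Omega_qh hs (P^n))" for n
  proof -
    have "P^n \<noteq> 0" using P0 by simp
    hence "finite (A_qh hs (P^n))" using finite_Res A_qh_Res finite_subset by metis
    thus "finite (Omega_star_qh hs (P^n))" "finite (Omega_qh hs (P^n))" using A_split(1)[of hs "P^n"] by auto
  qed
  have split: "N n = real (card (Omega_star_qh hs (P^n))) + real (card (Omega_qh hs (P^n)))" for n
  proof -
    have "card (A_qh hs (P^n)) = card (Omega_star_qh hs (P^n)) + card (Omega_qh hs (P^n))"
      unfolding A_split(1)[of hs "P^n"] by (rule card_Un_disjoint[OF fin A_split(2)])
    thus ?thesis unfolding N_def by simp
  qed
  have Omc: "card (Omega_qh hs (P^n)) = card (Omega_qh hs (P^\<nu>))" if "\<nu> \<le> n" for n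
    using that
  proof (induction n rule: dec_induct)
    case base show ?case by simp
  next
    case (step m) thus ?case using S.recur(2)[of m] by simp
  qed
  have rec: "N (Suc n) = real p * (N n - Z) + real (Ecount P n) * Z" if "\<nu> \<le> n" for n
  proof -
    have "card (A_qh hs (P^(n+1))) = p * card (Omega_star_qh hs (P^n)) + Ecount P n * card (Omega_qh hs (P^n))"
      using S.recur(1)[OF that] unfolding p_def .
    hence "N (Suc n) = real p * real (card (Omega_star_qh hs (P^n))) + real (Ecount P n) * real (card (Omega_qh hs (P^n)))"
      unfolding N_def by simp
    moreover have "real (card (Omega_star_qh hs (P^n))) = N n - Z" using split[of n] Omc[OF that] unfolding Z_def by simp
    moreover have "real (card (Omega_qh hs (P^n))) = Z" using Omc[OF that] unfolding Z_def by simp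
    ultimately show ?thesis by simp
  qed
  have Nnu: "N \<nu> = W + Z" using split[of \<nu>] unfolding W_def Z_def by simp
  have powi': "real p powi (- int \<nu>) = inverse (real p ^ \<nu>)" by (simp add: power_int_minus)
  have powi: "absP P powi (- int \<nu>) = inverse (real p ^ \<nu>)" unfolding absP by (rule powi')
  have general: "delta_qh hs P = (N \<nu> - alpha \<nu> * Z) / real p ^ \<nu>"
    if arec: "\<And>n. alpha (Suc n) = real p * alpha n - real p + real (Ecount P n)"
      and bd: "\<And>n. \<bar>alpha n\<bar> \<le> 1" for alpha :: "nat \<Rightarrow> real"
  proof -
    have cf: "N n = real p^(n-\<nu>) * (N \<nu> - alpha \<nu> * Z) + alpha n * Z" if "n \<ge> \<nu>" for n
      by (rule closed_form[where E="\<lambda>n. real (Ecount P n)", OF rec arec that])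
    have "(\<lambda>n. N n / real p ^ n) \<longlonglongrightarrow> (N \<nu> - alpha \<nu> * Z) / real p ^ \<nu>"
      by (rule lim_form[OF p1 cf bd])
    hence "lim (\<lambda>n. N n / real p ^ n) = (N \<nu> - alpha \<nu> * Z) / real p ^ \<nu>" by (rule limI)
    thus ?thesis unfolding delta_qh_def seq[symmetric] .
  qed
  have pp1: "real p + 1 \<noteq> 0" using p1 by simp
  have part1: "chi_q P = -1 \<longrightarrow>
         (odd \<nu> \<longrightarrow> delta_qh hs P = absP P powi (- int \<nu>) *
            (real (card (Omega_star_qh hs (P ^ \<nu>)))
             + 1 / (absP P + 1) * real (card (Omega_qh hs (P ^ \<nu>)))))
       \<and> (even \<nu> \<longrightarrow> delta_qh hs P = absP P powi (- int \<nu>) *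
            (real (card (Omega_star_qh hs (P ^ \<nu>)))
             + absP P / (absP P + 1) * real (card (Omega_qh hs (P ^ \<nu>)))))"
  proof
    assume chi: "chi_q P = -1"
    have c0: "coeff P 0 \<noteq> 0" and nsq: "\<not> (\<exists>c. coeff P 0 = c^2)"
      using chi unfolding chi_q_def by (auto split: if_splits)
    have an: "\<forall>x. \<not> P dvd x^2 + [:0,1:]"
      using recip[OF monic two c0] nsq by blast
    have nT: "\<not> P dvd [:0,1:]" using PT c0 by auto
    have oddp: "odd (card (Res P))" using q_odd unfolding p_def[symmetric] pq by simp
    have E: "real (Ecount P n) = (if even n then real p else 1)" for n
    proof (cases "even n")
      case True thus ?thesis unfolding Ecount_def p_def using E_inert_even[OF Pp nT oddp True] by simp
    next
      case False thus ?thesis unfolding Ecount_def using E_inert_odd[OF Pp an] by simp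
    qed
    define alpha where "alpha n = (if even n then 1 / (real p + 1) else real p / (real p + 1))" for n :: nat
    have arec: "alpha (Suc n) = real p * alpha n - real p + real (Ecount P n)" for n
      unfolding alpha_def E using pp1 by (auto simp: field_simps)
    have bd: "\<bar>alpha n\<bar> \<le> 1" for n unfolding alpha_def using p1 by auto
    have d: "delta_qh hs P = (N \<nu> - alpha \<nu> * Z) / real p ^ \<nu>" by (rule general[OF arec bd])
    show "(odd \<nu> \<longrightarrow> delta_qh hs P = absP P powi (- int \<nu>) *
            (real (card (Omega_star_qh hs (P ^ \<nu>)))
             + 1 / (absP P + 1) * real (card (Omega_qh hs (P ^ \<nu>)))))
       \<and> (even \<nu> \<longrightarrow> delta_qh hs P = absP P powi (- int \<nu>) *
            (real (card (Omega_star_qh hs (P ^ \<nu>)))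
             + absP P / (absP P + 1) * real (card (Omega_qh hs (P ^ \<nu>)))))"
      unfolding d absP powi' Nnu W_def[symmetric] Z_def[symmetric] alpha_def
      using pp1 by (auto simp: field_simps)
  qed
  have part2: "chi_q P = 0 \<longrightarrow>
         delta_qh hs P = absP P powi (- int \<nu>) *
            (real (card (Omega_star_qh hs (P ^ \<nu>)))
             + 1 / 2 * real (card (Omega_qh hs (P ^ \<nu>))))"
  proof
    assume chi: "chi_q P = 0"
    have c0: "coeff P 0 = 0" using chi unfolding chi_q_def by (auto split: if_splits)
    have PeqT: "P = [:0,1:]" by (rule T_lemma[OF monic irr c0])
    have pq': "p = CARD('a)" unfolding pq PeqT by simp
    have E: "real (Ecount P n) = (real p + 1) / 2" for n
    proof -
      have "Ecount P n = card (range (\<lambda>s::'a. s^2))" unfolding Ecount_def by (rule E_ram[OF PeqT])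
      moreover have "2 * card (range (\<lambda>s::'a. s^2)) = CARD('a) + 1" by (rule card_squares[OF q_odd])
      ultimately have "2 * Ecount P n = p + 1" unfolding pq' by simp
      hence "2 * real (Ecount P n) = real p + 1" by (metis of_nat_1 of_nat_add of_nat_mult of_nat_numeral)
      thus ?thesis by simp
    qed
    define alpha where "alpha n = (1/2 :: real)" for n :: nat
    have arec: "alpha (Suc n) = real p * alpha n - real p + real (Ecount P n)" for n
      unfolding alpha_def E by (simp add: field_simps)
    have bd: "\<bar>alpha n\<bar> \<le> 1" for n unfolding alpha_def by simp
    have d: "delta_qh hs P = (N \<nu> - alpha \<nu> * Z) / real p ^ \<nu>" by (rule general[OF arec bd])
    show "delta_qh hs P = absP P powi (- int \<nu>) *
            (real (card (Omega_star_qh hs (P ^ \<nu>)))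
             + 1 / 2 * real (card (Omega_qh hs (P ^ \<nu>))))"
      unfolding d powi Nnu W_def[symmetric] Z_def[symmetric] alpha_def by (simp add: field_simps)
  qed
  show ?thesis using conv part1 part2 by blast
qed


end
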